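(* Let $T>0$ and let $G:\mathbb{R}^n\leadsto\mathbb{R}^n$ be a Lipschitz continuous (in the Hausdorff distance) set-valued map with nonempty, convex, compact values. Then an initial function $g_0\in C(\mathbb{R}^n,\mathbb{R})$ is reconstructible if and only if there exists a function $g\in C(\mathbb{R}^n,\mathbb{R})$ such that $g_0=V(0,\cdot)$, where $V$ is the value function of the inverse Mayer problem with terminal function $g$, i.e. $V(t_0,x_0)=\sup\{g(x(T))\mid x\in\mathrm{Sol}_G(t_0,x_0)\}$.
   Context: $\mathrm{Sol}_G(t_0,x_0)$ denotes the set of absolutely continuous $x:[0,T]\to\mathbb{R}^n$ with $\dot x(t)\in G(x(t))$ for a.e. $t\in[0,T]$ and $x(t_0)=x_0$. For $g_0\in C(\mathbb{R}^n,\mathbb{R})$, the Mayer value function is $U(t_0,x_0)=\inf\{g_0(x(0))\mid x\in\mathrm{Sol}_G(t_0,x_0)\}$; with $g_T=U(T,\cdot)$, the inverse Mayer value function is $W(t_0,x_0)=\sup\{g_T(x(T))\mid x\in\mathrm{Sol}_G(t_0,x_0)\}$. The function $g_0$ is reconstructible (in time $T$) if $g_0=W(0,\cdot)$. (Equivalently, $U$ and $W$ are the forward viscosity solution with $U(0,\cdot)=g_0$ and the backward viscosity solution with $W(T,\cdot)=U(T,\cdot)$ of $\nabla_tu+H(x,\nabla_xu)=0$ with $H(x,p)=\sup\{\langle v,p\rangle\mid v\in G(x)\}$.) *)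

theory Defs
  imports "HOL-Analysis.Analysis"
begin

definition hausdist :: "'a::metric_space set \<Rightarrow> 'a set \<Rightarrow> real" where
  "hausdist A B = max (SUP a\<in>A. infdist a B) (SUP b\<in>B. infdist b A)"

definition abs_cont_on :: "real \<Rightarrow> real \<Rightarrow> (real \<Rightarrow> 'a::real_normed_vector) \<Rightarrow> bool" where
  "abs_cont_on s t f \<longleftrightarrow>
     (\<forall>e>0. \<exists>d>0. \<forall>(n::nat) (a::nat \<Rightarrow> real) (b::nat \<Rightarrow> real).
        (\<forall>i<n. s \<le> a i \<and> a i \<le> b i \<and> b i \<le> t) \<and>
        (\<forall>i<n. \<forall>j<n. i \<noteq> j \<longrightarrow> b i \<le> a j \<or> b j \<le> a i) \<and>
        (\<Sum>i<n. b i - a i) < d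
        \<longrightarrow> (\<Sum>i<n. norm (f (b i) - f (a i))) < e)"

definition Sol :: "('a::euclidean_space \<Rightarrow> 'a set) \<Rightarrow> real \<Rightarrow> real \<Rightarrow> 'a \<Rightarrow> (real \<Rightarrow> 'a) set" where
  "Sol G T t0 x0 = {x. abs_cont_on 0 T x \<and>
      (\<exists>N. N \<in> null_sets lebesgue \<and>
         (\<forall>t\<in>{0..T} - N. \<exists>v. (x has_vector_derivative v) (at t within {0..T}) \<and> v \<in> G (x t))) \<and>
      x t0 = x0}"

definition mayer_value :: "('a::euclidean_space \<Rightarrow> 'a set) \<Rightarrow> real \<Rightarrow> ('a \<Rightarrow> real) \<Rightarrow> real \<Rightarrow> 'a \<Rightarrow> real" where
  "mayer_value G T g0 t0 x0 = Inf {g0 (x 0) | x. x \<in> Sol G T t0 x0}"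

definition inv_mayer_value :: "('a::euclidean_space \<Rightarrow> 'a set) \<Rightarrow> real \<Rightarrow> ('a \<Rightarrow> real) \<Rightarrow> real \<Rightarrow> 'a \<Rightarrow> real" where
  "inv_mayer_value G T g t0 x0 = Sup {g (x T) | x. x \<in> Sol G T t0 x0}"

definition reconstructible :: "('a::euclidean_space \<Rightarrow> 'a set) \<Rightarrow> real \<Rightarrow> ('a \<Rightarrow> real) \<Rightarrow> bool" where
  "reconstructible G T g0 \<longleftrightarrow>
     g0 = inv_mayer_value G T (mayer_value G T g0 T) 0"

end

theory Submission
  imports Defs
begin


lemma ac_sub:
  assumes "abs_cont_on a b f" "a \<le> c" "d \<le> b"
  shows "abs_cont_on c d f"
  unfolding abs_cont_on_def
proof (intro allI impI)
  fix e :: real assume "e > 0"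
  then obtain dd where "dd > 0" and H: "\<forall>(n::nat) (aa::nat \<Rightarrow> real) bb.
        (\<forall>i<n. a \<le> aa i \<and> aa i \<le> bb i \<and> bb i \<le> b) \<and>
        (\<forall>i<n. \<forall>j<n. i \<noteq> j \<longrightarrow> bb i \<le> aa j \<or> bb j \<le> aa i) \<and>
        (\<Sum>i<n. bb i - aa i) < dd \<longrightarrow> (\<Sum>i<n. norm (f (bb i) - f (aa i))) < e"
    using assms(1) unfolding abs_cont_on_def by blast
  show "\<exists>dd>0. \<forall>(n::nat) (aa::nat \<Rightarrow> real) bb.
        (\<forall>i<n. c \<le> aa i \<and> aa i \<le> bb i \<and> bb i \<le> d) \<and>
        (\<forall>i<n. \<forall>j<n. i \<noteq> j \<longrightarrow> bb i \<le> aa j \<or> bb j \<le> aa i) \<and>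
        (\<Sum>i<n. bb i - aa i) < dd \<longrightarrow> (\<Sum>i<n. norm (f (bb i) - f (aa i))) < e"
  proof (intro exI[of _ dd] conjI allI impI)
    fix n :: nat and aa bb :: "nat \<Rightarrow> real"
    assume A: "(\<forall>i<n. c \<le> aa i \<and> aa i \<le> bb i \<and> bb i \<le> d) \<and>
        (\<forall>i<n. \<forall>j<n. i \<noteq> j \<longrightarrow> bb i \<le> aa j \<or> bb j \<le> aa i) \<and>
        (\<Sum>i<n. bb i - aa i) < dd"
    have "\<forall>i<n. a \<le> aa i \<and> aa i \<le> bb i \<and> bb i \<le> b"
      using A assms(2,3) by force
    with A H show "(\<Sum>i<n. norm (f (bb i) - f (aa i))) < e" by blast
  qed (rule \<open>dd > 0\<close>)
qed

lemma ac_cont: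
  assumes "abs_cont_on a b f"
  shows "continuous_on {a..b} f"
  unfolding continuous_on_iff
proof (intro ballI allI impI)
  fix x e :: real assume x: "x \<in> {a..b}" and e: "e > 0"
  then obtain d where d: "d > 0" and H: "\<forall>(n::nat) (aa::nat \<Rightarrow> real) bb.
        (\<forall>i<n. a \<le> aa i \<and> aa i \<le> bb i \<and> bb i \<le> b) \<and>
        (\<forall>i<n. \<forall>j<n. i \<noteq> j \<longrightarrow> bb i \<le> aa j \<or> bb j \<le> aa i) \<and>
        (\<Sum>i<n. bb i - aa i) < d \<longrightarrow> (\<Sum>i<n. norm (f (bb i) - f (aa i))) < e"
    using assms unfolding abs_cont_on_def by blast
  show "\<exists>d>0. \<forall>x'\<in>{a..b}. dist x' x < d \<longrightarrow> dist (f x') (f x) < e"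
  proof (intro exI conjI ballI impI)
    fix y assume y: "y \<in> {a..b}" "dist y x < d"
    have "(\<Sum>i<(1::nat). norm (f ((\<lambda>_. max x y) i) - f ((\<lambda>_. min x y) i))) < e"
      using H[rule_format, of 1 "\<lambda>_. min x y" "\<lambda>_. max x y"] x y d
      by (auto simp: dist_real_def max_def min_def split: if_splits)
    then show "dist (f y) (f x) < e"
      by (cases "x \<le> y") (auto simp: dist_norm norm_minus_commute max_def min_def)
  qed (rule d)
qed

lemma interval_order_lemma:
  fixes u1 v1 u2 v2 :: real
  assumes "u1 < v1" "u2 < v2" "{u1<..<v1} \<inter> {u2<..<v2} = {}"
  shows "v1 \<le> u2 \<or> v2 \<le> u1"
proof (rule ccontr)
  assume "\<not> ?thesis"
  then have "(max u1 u2 + min v1 v2)/2 \<in> {u1<..<v1} \<inter> {u2<..<v2}"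
    using assms by (cases "u1 \<le> u2"; cases "v1 \<le> v2"; auto simp: max_def min_def)
  then show False using assms by auto
qed

lemma measure_leb_Icc: assumes "u \<le> v" shows "measure lebesgue {u..v::real} = v - u"
proof -
  have "measure lebesgue {u..v} = measure lborel {u..v}"
    by (rule measure_completion) simp
  then show ?thesis using measure_lborel_Icc assms by simp
qed

lemma tdiv_elem:
  assumes "p tagged_division_of {a..b::real}" "(x,K) \<in> p"
  shows "\<exists>u v. K = {u..v} \<and> u \<le> x \<and> x \<le> v \<and> a \<le> u \<and> v \<le> b \<and> Inf K = u \<and> Sup K = v"
proof -
  obtain u v where K: "K = cbox u v" using tagged_division_ofD(4)[OF assms] by blast
  have "x \<in> K" "K \<subseteq> {a..b}" using tagged_division_ofD(2,3)[OF assms(1)] assms(2) by auto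
  then show ?thesis using K by (intro exI[of _ u] exI[of _ v]) auto
qed

lemma tdiv_order:
  assumes "p tagged_division_of {a..b::real}" "(x1,K1) \<in> p" "(x2,K2) \<in> p" "(x1,K1) \<noteq> (x2,K2)"
    "Inf K1 < Sup K1" "Inf K2 < Sup K2"
  shows "Sup K1 \<le> Inf K2 \<or> Sup K2 \<le> Inf K1"
proof -
  obtain u1 v1 where 1: "K1 = {u1..v1}" "Inf K1 = u1" "Sup K1 = v1" using tdiv_elem[OF assms(1,2)] by blast
  obtain u2 v2 where 2: "K2 = {u2..v2}" "Inf K2 = u2" "Sup K2 = v2" using tdiv_elem[OF assms(1,3)] by blast
  have "interior K1 \<inter> interior K2 = {}" using tagged_division_ofD(5)[OF assms(1-4)] .
  then have "{u1<..<v1} \<inter> {u2<..<v2} = {}" using 1 2 by simp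
  then show ?thesis using interval_order_lemma[of u1 v1 u2 v2] assms(5,6) 1 2 by auto
qed

lemma ac_mv:
  fixes f :: "real \<Rightarrow> 'a::euclidean_space"
  assumes ac: "abs_cont_on a b f" and ab: "a \<le> b" and N: "negligible N"
    and der: "\<And>t. t \<in> {a..b} - N \<Longrightarrow> \<exists>v. (f has_vector_derivative v) (at t within {a..b}) \<and> v \<bullet> n \<le> \<beta>"
  shows "(f b - f a) \<bullet> n \<le> \<beta> * (b - a)"
proof -
  have key: "(f b - f a) \<bullet> n - \<beta> * (b - a) \<le> e * (b - a + norm n + 1)" if e: "e > 0" for e
  proof -
    obtain d where d: "d > 0" and H: "\<forall>(m::nat) (aa::nat \<Rightarrow> real) bb.
        (\<forall>i<m. a \<le> aa i \<and> aa i \<le> bb i \<and> bb i \<le> b) \<and>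
        (\<forall>i<m. \<forall>j<m. i \<noteq> j \<longrightarrow> bb i \<le> aa j \<or> bb j \<le> aa i) \<and>
        (\<Sum>i<m. bb i - aa i) < d \<longrightarrow> (\<Sum>i<m. norm (f (bb i) - f (aa i))) < e"
      using ac e unfolding abs_cont_on_def by blast
    define d' where "d' = min d (e / (\<bar>\<beta>\<bar> + 1))"
    have d': "d' > 0" "d' \<le> d" using d e by (auto simp: d'_def)
    have d'3: "\<bar>\<beta>\<bar> * d' \<le> e"
    proof -
      have "\<bar>\<beta>\<bar> * d' \<le> \<bar>\<beta>\<bar> * (e / (\<bar>\<beta>\<bar> + 1))"
        by (intro mult_left_mono) (auto simp: d'_def)
      also have "\<dots> \<le> e" using e by (simp add: field_simps)
      finally show ?thesis .
    qed
    obtain U where U: "open U" "N \<subseteq> U" "U \<in> lmeasurable" "measure lebesgue U < d'"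
    proof -
      obtain T where T: "open T" "N \<subseteq> T" "(T - N) \<in> lmeasurable" "emeasure lebesgue (T - N) < ennreal d'"
        using sets_lebesgue_outer_open[OF negligible_imp_sets[OF N] d'(1)] by blast
      have neg: "negligible ((T - N) - T \<union> (T - (T - N)))"
        by (rule negligible_subset[OF N]) auto
      have Tm: "T \<in> lmeasurable" by (rule lmeasurable_negligible_symdiff[OF T(3) neg])
      have "measure lebesgue T = measure lebesgue (T - N)"
        by (rule measure_negligible_symdiff[OF T(3) neg])
      moreover have "measure lebesgue (T - N) < d'"
        using T(3,4) d'(1) by (simp add: emeasure_eq_measure2 ennreal_less_iff)
      ultimately show ?thesis using that T(1,2) Tm by auto
    qed
    define e' where "e' = e / (norm n + 1)"
    have e': "e' > 0" "e' * norm n \<le> e"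
    proof -
      show "e' > 0" using e by (simp add: e'_def add_nonneg_pos)
      have "e' * norm n \<le> e' * (norm n + 1)" using \<open>e' > 0\<close> by simp
      also have "\<dots> = e" unfolding e'_def
        by (metis add_nonneg_pos nonzero_eq_divide_eq norm_ge_zero order_less_irrefl zero_less_one)
      finally show "e' * norm n \<le> e" .
    qed
    have gauge_ex: "\<forall>t. \<exists>r. r > 0 \<and> (t \<in> N \<longrightarrow> ball t r \<subseteq> U) \<and>
        (t \<in> {a..b} - N \<longrightarrow> (\<exists>v. v \<bullet> n \<le> \<beta> \<and>
           (\<forall>s\<in>{a..b}. \<bar>s - t\<bar> < r \<longrightarrow> norm (f s - f t - (s - t) *\<^sub>R v) \<le> e' * \<bar>s - t\<bar>)))"
    proof
      fix t
      show "\<exists>r. r > 0 \<and> (t \<in> N \<longrightarrow> ball t r \<subseteq> U) \<and>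
        (t \<in> {a..b} - N \<longrightarrow> (\<exists>v. v \<bullet> n \<le> \<beta> \<and>
           (\<forall>s\<in>{a..b}. \<bar>s - t\<bar> < r \<longrightarrow> norm (f s - f t - (s - t) *\<^sub>R v) \<le> e' * \<bar>s - t\<bar>)))"
      proof (cases "t \<in> N")
        case True
        then obtain r where "r > 0" "ball t r \<subseteq> U" using U(1,2) open_contains_ball by blast
        then show ?thesis using True by blast
      next
        case False
        show ?thesis
        proof (cases "t \<in> {a..b}")
          case True
          then obtain v where v: "(f has_vector_derivative v) (at t within {a..b})" "v \<bullet> n \<le> \<beta>"
            using der False by blast
          then obtain r where r: "r > 0" "\<forall>s\<in>{a..b}. norm (s - t) < r \<longrightarrow>
               norm (f s - f t - (s - t) *\<^sub>R v) \<le> e' * norm (s - t)"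
            unfolding has_vector_derivative_def has_derivative_within_alt using e'(1) by blast
          show ?thesis using r v False by (intro exI[of _ r]) auto
        next
          case F2: False
          show ?thesis using False F2 by (intro exI[of _ 1]) auto
        qed
      qed
    qed
    then obtain r where rr: "\<forall>t. r t > 0 \<and> (t \<in> N \<longrightarrow> ball t (r t) \<subseteq> U) \<and>
        (t \<in> {a..b} - N \<longrightarrow> (\<exists>v. v \<bullet> n \<le> \<beta> \<and>
           (\<forall>s\<in>{a..b}. \<bar>s - t\<bar> < r t \<longrightarrow> norm (f s - f t - (s - t) *\<^sub>R v) \<le> e' * \<bar>s - t\<bar>)))"
      by (rule choice[THEN exE]) blast
    have r: "\<And>t. r t > 0" "\<And>t. t \<in> N \<Longrightarrow> ball t (r t) \<subseteq> U"
      "\<And>t. t \<in> {a..b} - N \<Longrightarrow> (\<exists>v. v \<bullet> n \<le> \<beta> \<and>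
           (\<forall>s\<in>{a..b}. \<bar>s - t\<bar> < r t \<longrightarrow> norm (f s - f t - (s - t) *\<^sub>R v) \<le> e' * \<bar>s - t\<bar>))"
      using rr by blast+
    have "gauge (\<lambda>t. ball t (r t))" using gauge_ball_dependent r(1) by blast
    then obtain p where p0: "p tagged_division_of cbox a b" and fine: "(\<lambda>t. ball t (r t)) fine p"
      by (rule fine_division_exists)
    have p: "p tagged_division_of {a..b}" using p0 by simp
    have finp: "finite p" using p by blast
    define \<phi> where "\<phi> = (\<lambda>xK::real \<times> real set. (f (Sup (snd xK)) - f (Inf (snd xK))) \<bullet> n - \<beta> * (Sup (snd xK) - Inf (snd xK)))"
    have sum_phi: "(\<Sum>xK\<in>p. \<phi> xK) = (f b - f a) \<bullet> n - \<beta> * (b - a)"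
    proof -
      have 1: "(\<Sum>xK\<in>p. f (Sup (snd xK)) - f (Inf (snd xK))) = f b - f a"
        using additive_tagged_division_1[OF ab p, of f] by (simp add: split_def)
      have 2: "(\<Sum>xK\<in>p. Sup (snd xK) - Inf (snd xK)) = b - a"
        using additive_tagged_division_1[OF ab p, of "\<lambda>x. x"] by (simp add: split_def)
      have "(\<Sum>xK\<in>p. \<phi> xK) = (\<Sum>xK\<in>p. f (Sup (snd xK)) - f (Inf (snd xK))) \<bullet> n
             - \<beta> * (\<Sum>xK\<in>p. Sup (snd xK) - Inf (snd xK))"
        unfolding \<phi>_def sum_subtractf[symmetric] inner_sum_left sum_distrib_left by simp
      then show ?thesis using 1 2 by simp
    qed
    define Q where "Q = {xK \<in> p. fst xK \<in> N \<and> Inf (snd xK) < Sup (snd xK)}"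
    have QP: "Q \<subseteq> p" by (auto simp: Q_def)
    have finQ: "finite Q" using finp QP finite_subset by blast
    have len_nonneg: "0 \<le> Sup (snd xK) - Inf (snd xK)" if "xK \<in> p" for xK
      using tdiv_elem[OF p, of "fst xK" "snd xK"] that by auto
    have good: "\<phi> xK \<le> e * (Sup (snd xK) - Inf (snd xK))" if xK: "xK \<in> p - Q" for xK
    proof -
      obtain x K where xK_eq: "xK = (x,K)" by (cases xK)
      obtain u v where uv: "K = {u..v}" "u \<le> x" "x \<le> v" "a \<le> u" "v \<le> b" "Inf K = u" "Sup K = v"
        using tdiv_elem[OF p, of x K] xK xK_eq by auto
      show ?thesis
      proof (cases "x \<in> N")
        case True
        then have "\<not> u < v" using xK xK_eq uv by (auto simp: Q_def)
        then have "u = v" using uv by auto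
        then show ?thesis using xK_eq uv by (simp add: \<phi>_def)
      next
        case False
        then have xab: "x \<in> {a..b} - N" using uv by auto
        obtain w where w: "w \<bullet> n \<le> \<beta>" and wH: "\<forall>s\<in>{a..b}. \<bar>s - x\<bar> < r x \<longrightarrow>
               norm (f s - f x - (s - x) *\<^sub>R w) \<le> e' * \<bar>s - x\<bar>"
          using r(3)[OF xab] by blast
        have Kb: "K \<subseteq> ball x (r x)" using fine xK xK_eq by (auto simp: fine_def)
        have "u \<in> K" "v \<in> K" using uv by auto
        then have "u \<in> ball x (r x)" "v \<in> ball x (r x)" using Kb by blast+
        then have ur: "\<bar>u - x\<bar> < r x" and vr: "\<bar>v - x\<bar> < r x" by (auto simp: dist_real_def)
        define A where "A = f v - f x - (v - x) *\<^sub>R w"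
        define B where "B = f u - f x - (u - x) *\<^sub>R w"
        have uab: "u \<in> {a..b}" and vab: "v \<in> {a..b}" using uv by auto
        have nA: "norm A \<le> e' * (v - x)" using wH[rule_format, OF vab vr] uv by (simp add: A_def)
        have nB: "norm B \<le> e' * (x - u)" using wH[rule_format, OF uab ur] uv by (simp add: B_def)
        have eq: "f v - f u = A - B + (v - u) *\<^sub>R w" by (simp add: A_def B_def algebra_simps)
        have "(f v - f u) \<bullet> n = A \<bullet> n - B \<bullet> n + (v - u) * (w \<bullet> n)"
          by (simp add: eq inner_diff_left inner_add_left)
        also have "\<dots> \<le> norm A * norm n + norm B * norm n + (v - u) * \<beta>"
        proof -
          have "A \<bullet> n \<le> norm A * norm n" by (rule norm_cauchy_schwarz)
          moreover have "- (B \<bullet> n) \<le> norm B * norm n"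
            using norm_cauchy_schwarz[of "-B" n] by simp
          moreover have "(v - u) * (w \<bullet> n) \<le> (v - u) * \<beta>"
            using w uv by (intro mult_left_mono) auto
          ultimately show ?thesis by linarith
        qed
        also have "\<dots> \<le> e' * (v - x) * norm n + e' * (x - u) * norm n + (v - u) * \<beta>"
        proof -
          have "norm A * norm n \<le> e' * (v - x) * norm n" by (rule mult_right_mono[OF nA]) simp
          moreover have "norm B * norm n \<le> e' * (x - u) * norm n" by (rule mult_right_mono[OF nB]) simp
          ultimately show ?thesis by linarith
        qed
        also have "\<dots> = (e' * norm n) * (v - u) + (v - u) * \<beta>" by (simp add: algebra_simps)
        also have "\<dots> \<le> e * (v - u) + (v - u) * \<beta>"
          using mult_right_mono[OF e'(2), of "v - u"] uv by simp
        finally have fin: "(f v - f u) \<bullet> n \<le> e * (v - u) + (v - u) * \<beta>" .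
        have eq: "\<phi> xK = (f v - f u) \<bullet> n - \<beta> * (v - u)" using xK_eq uv(6,7) by (simp add: \<phi>_def)
        have mc: "(v - u) * \<beta> = \<beta> * (v - u)" by (rule mult.commute)
        have "\<phi> xK \<le> e * (v - u)" using fin eq mc by linarith
        then show ?thesis using xK_eq uv(6,7) by simp
      qed
    qed
    have bad: "\<phi> xK \<le> norm n * norm (f (Sup (snd xK)) - f (Inf (snd xK))) + \<bar>\<beta>\<bar> * (Sup (snd xK) - Inf (snd xK))"
      if xK: "xK \<in> Q" for xK
    proof -
      have l: "0 \<le> Sup (snd xK) - Inf (snd xK)" using len_nonneg[of xK] xK QP by blast
      have "(f (Sup (snd xK)) - f (Inf (snd xK))) \<bullet> n \<le> norm n * norm (f (Sup (snd xK)) - f (Inf (snd xK)))"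
        using norm_cauchy_schwarz[of "f (Sup (snd xK)) - f (Inf (snd xK))" n] by (simp add: mult.commute)
      moreover have "- \<beta> * (Sup (snd xK) - Inf (snd xK)) \<le> \<bar>\<beta>\<bar> * (Sup (snd xK) - Inf (snd xK))"
        using l by (intro mult_right_mono) auto
      ultimately show ?thesis by (simp add: \<phi>_def)
    qed
    have pairQ: "Sup (snd xK) \<le> Inf (snd yL) \<or> Sup (snd yL) \<le> Inf (snd xK)"
      if "xK \<in> Q" "yL \<in> Q" "xK \<noteq> yL" for xK yL
      using tdiv_order[OF p, of "fst xK" "snd xK" "fst yL" "snd yL"] that by (auto simp: Q_def)
    have Qelem: "\<exists>u v. snd xK = {u..v} \<and> u \<le> v \<and> Inf (snd xK) = u \<and> Sup (snd xK) = v"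
      if "xK \<in> Q" for xK
    proof -
      have "xK \<in> p" using that QP by blast
      then have "(fst xK, snd xK) \<in> p" by simp
      from tdiv_elem[OF p this] obtain u v where "snd xK = {u..v}" "u \<le> fst xK" "fst xK \<le> v"
        "Inf (snd xK) = u" "Sup (snd xK) = v" by blast
      then show ?thesis by (intro exI[of _ u] exI[of _ v]) simp
    qed
    have lenQ: "(\<Sum>xK\<in>Q. Sup (snd xK) - Inf (snd xK)) < d'"
    proof -
      have meq: "measure lebesgue (snd xK) = Sup (snd xK) - Inf (snd xK)" if xQ: "xK \<in> Q" for xK
      proof -
        obtain u v where "snd xK = {u..v}" "u \<le> v" "Inf (snd xK) = u" "Sup (snd xK) = v"
          using Qelem[OF xQ] by blast
        then show ?thesis using measure_leb_Icc[of u v] by simp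
      qed
      have lm: "snd xK \<in> lmeasurable" if xQ: "xK \<in> Q" for xK
      proof -
        obtain u v where "snd xK = {u..v}"
          using Qelem[OF xQ] by blast
        then show ?thesis by simp
      qed
      have pw: "pairwise (\<lambda>xK yL. negligible (snd xK \<inter> snd yL)) Q"
        unfolding pairwise_def
      proof (intro ballI impI)
        fix xK yL assume H: "xK \<in> Q" "yL \<in> Q" "xK \<noteq> yL"
        obtain u1 v1 where 1: "snd xK = {u1..v1}" "Inf (snd xK) = u1" "Sup (snd xK) = v1"
          using Qelem[OF H(1)] by blast
        obtain u2 v2 where 2: "snd yL = {u2..v2}" "Inf (snd yL) = u2" "Sup (snd yL) = v2"
          using Qelem[OF H(2)] by blast
        have "v1 \<le> u2 \<or> v2 \<le> u1" using pairQ[OF H] 1 2 by simp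
        then have sub: "snd xK \<inter> snd yL \<subseteq> {v1, v2}" using 1 2 by auto
        have "negligible {v1, v2}" by simp
        then show "negligible (snd xK \<inter> snd yL)"
          using sub by (rule negligible_subset)
      qed
      have "(\<Sum>xK\<in>Q. Sup (snd xK) - Inf (snd xK)) = (\<Sum>xK\<in>Q. measure lebesgue (snd xK))"
        using meq by simp
      also have "\<dots> = measure lebesgue (\<Union>(snd ` Q))"
        using measure_negligible_finite_Union_image[OF finQ lm pw] by simp
      also have "\<dots> \<le> measure lebesgue U"
      proof (rule measure_mono_fmeasurable)
        show "\<Union>(snd ` Q) \<subseteq> U"
        proof
          fix y assume "y \<in> \<Union>(snd ` Q)"
          then obtain xK where xK: "xK \<in> Q" "y \<in> snd xK" by blast
          have "(fst xK, snd xK) \<in> p" using xK QP by auto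
          then have "snd xK \<subseteq> ball (fst xK) (r (fst xK))"
            by (rule fineD[OF fine])
          moreover have "fst xK \<in> N" using xK by (simp add: Q_def)
          ultimately show "y \<in> U" using r(2)[of "fst xK"] xK by blast
        qed
        have "\<Union>(snd ` Q) \<in> lmeasurable"
          using lm finQ by (intro fmeasurable.finite_UN) auto
        then show "\<Union>(snd ` Q) \<in> sets lebesgue" by (rule fmeasurableD)
      qed (rule U(3))
      also have "\<dots> < d'" by (rule U(4))
      finally show ?thesis .
    qed
    have acQ: "(\<Sum>xK\<in>Q. norm (f (Sup (snd xK)) - f (Inf (snd xK)))) < e"
    proof -
      obtain g where g: "bij_betw g {0..<card Q} Q" using ex_bij_betw_nat_finite[OF finQ] by blast
      define A where "A i = Inf (snd (g i))" for i
      define B where "B i = Sup (snd (g i))" for i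
      have gQ: "g i \<in> Q" if "i < card Q" for i using g that by (auto simp: bij_betw_def)
      have c1: "\<forall>i<card Q. a \<le> A i \<and> A i \<le> B i \<and> B i \<le> b"
      proof (intro allI impI)
        fix i assume i: "i < card Q"
        show "a \<le> A i \<and> A i \<le> B i \<and> B i \<le> b"
          using tdiv_elem[OF p, of "fst (g i)" "snd (g i)"] gQ[OF i] QP by (fastforce simp: A_def B_def)
      qed
      have c2: "\<forall>i<card Q. \<forall>j<card Q. i \<noteq> j \<longrightarrow> B i \<le> A j \<or> B j \<le> A i"
      proof (intro allI impI)
        fix i j assume ij: "i < card Q" "j < card Q" "i \<noteq> j"
        have "g i \<noteq> g j" using g ij by (auto simp: bij_betw_def inj_on_def)
        then show "B i \<le> A j \<or> B j \<le> A i" using pairQ[OF gQ[OF ij(1)] gQ[OF ij(2)]] by (simp add: A_def B_def)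
      qed
      have s1: "(\<Sum>i<card Q. B i - A i) = (\<Sum>xK\<in>Q. Sup (snd xK) - Inf (snd xK))"
        using sum.reindex_bij_betw[OF g, of "\<lambda>xK. Sup (snd xK) - Inf (snd xK)"]
        by (simp add: A_def B_def lessThan_atLeast0)
      have s2: "(\<Sum>i<card Q. norm (f (B i) - f (A i))) = (\<Sum>xK\<in>Q. norm (f (Sup (snd xK)) - f (Inf (snd xK))))"
        using sum.reindex_bij_betw[OF g, of "\<lambda>xK. norm (f (Sup (snd xK)) - f (Inf (snd xK)))"]
        by (simp add: A_def B_def lessThan_atLeast0)
      have "(\<Sum>i<card Q. B i - A i) < d" using s1 lenQ d'(2) by simp
      then have "(\<Sum>i<card Q. norm (f (B i) - f (A i))) < e" using H c1 c2 by blast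
      then show ?thesis using s2 by simp
    qed
    define S1 where "S1 = (\<Sum>xK\<in>p - Q. Sup (snd xK) - Inf (snd xK))"
    define S2 where "S2 = (\<Sum>xK\<in>Q. norm (f (Sup (snd xK)) - f (Inf (snd xK))))"
    define S3 where "S3 = (\<Sum>xK\<in>Q. Sup (snd xK) - Inf (snd xK))"
    have split: "(\<Sum>xK\<in>p. \<phi> xK) = (\<Sum>xK\<in>p - Q. \<phi> xK) + (\<Sum>xK\<in>Q. \<phi> xK)"
      by (rule sum.subset_diff[OF QP finp])
    have g1: "(\<Sum>xK\<in>p - Q. \<phi> xK) \<le> e * S1"
    proof -
      have "(\<Sum>xK\<in>p - Q. \<phi> xK) \<le> (\<Sum>xK\<in>p - Q. e * (Sup (snd xK) - Inf (snd xK)))"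
        by (rule sum_mono) (rule good)
      also have "\<dots> = e * S1" by (simp add: S1_def sum_distrib_left)
      finally show ?thesis .
    qed
    have g2: "(\<Sum>xK\<in>Q. \<phi> xK) \<le> norm n * S2 + \<bar>\<beta>\<bar> * S3"
    proof -
      have "(\<Sum>xK\<in>Q. \<phi> xK) \<le> (\<Sum>xK\<in>Q. norm n * norm (f (Sup (snd xK)) - f (Inf (snd xK))) + \<bar>\<beta>\<bar> * (Sup (snd xK) - Inf (snd xK)))"
        by (rule sum_mono) (rule bad)
      also have "\<dots> = norm n * S2 + \<bar>\<beta>\<bar> * S3" by (simp add: S2_def S3_def sum_distrib_left sum.distrib)
      finally show ?thesis .
    qed
    have S1: "S1 \<le> b - a"
    proof -
      have "S1 \<le> (\<Sum>xK\<in>p. Sup (snd xK) - Inf (snd xK))"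
        unfolding S1_def using len_nonneg finp by (intro sum_mono2) auto
      also have "\<dots> = b - a"
        using additive_tagged_division_1[OF ab p, of "\<lambda>x. x"] by (simp add: split_def)
      finally show ?thesis .
    qed
    have "e * S1 \<le> e * (b - a)" using S1 e by simp
    moreover have "norm n * S2 \<le> norm n * e" using acQ by (simp add: S2_def mult_left_mono)
    moreover have "\<bar>\<beta>\<bar> * S3 \<le> e"
    proof -
      have "\<bar>\<beta>\<bar> * S3 \<le> \<bar>\<beta>\<bar> * d'" using lenQ by (simp add: S3_def mult_left_mono)
      then show ?thesis using d'3 by linarith
    qed
    ultimately have "(\<Sum>xK\<in>p. \<phi> xK) \<le> e * (b - a + norm n + 1)"
      using split g1 g2 by (simp add: algebra_simps)
    then show ?thesis using sum_phi by simp
  qed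
  show ?thesis
  proof (rule ccontr)
    assume "\<not> ?thesis"
    then have X: "(f b - f a) \<bullet> n - \<beta> * (b - a) > 0" by simp
    define C where "C = b - a + norm n + 1"
    have C: "C > 0" using ab by (simp add: C_def add_nonneg_pos)
    define X where "X = (f b - f a) \<bullet> n - \<beta> * (b - a)"
    have "X \<le> (X / (2 * C)) * C" using key[of "X / (2*C)"] X C by (simp add: X_def C_def)
    also have "\<dots> = X / 2" using C by (simp add: field_simps)
    finally show False using X by (simp add: X_def)
  qed
qed



lemma ac_norm_bound:
  fixes f :: "real \<Rightarrow> 'a::euclidean_space"
  assumes ac: "abs_cont_on a b f" and ab: "a \<le> b" and N: "negligible N" and B: "B \<ge> 0"
    and der: "\<And>t. t \<in> {a..b} - N \<Longrightarrow> \<exists>v. (f has_vector_derivative v) (at t within {a..b}) \<and> norm v \<le> B"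
  shows "norm (f b - f a) \<le> B * (b - a)"
proof (cases "f b = f a")
  case True then show ?thesis using B ab by simp
next
  case False
  define n where "n = (1 / norm (f b - f a)) *\<^sub>R (f b - f a)"
  have nn: "norm n = 1" using False by (simp add: n_def)
  have "(f b - f a) \<bullet> n \<le> B * (b - a)"
  proof (rule ac_mv[OF ac ab N])
    fix t assume t: "t \<in> {a..b} - N"
    then obtain v where v: "(f has_vector_derivative v) (at t within {a..b})" "norm v \<le> B"
      using der by blast
    have "v \<bullet> n \<le> norm v * norm n" by (rule norm_cauchy_schwarz)
    then have "v \<bullet> n \<le> B" using v nn by simp
    then show "\<exists>v. (f has_vector_derivative v) (at t within {a..b}) \<and> v \<bullet> n \<le> B" using v by blast
  qed
  moreover have "(f b - f a) \<bullet> n = norm (f b - f a)"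
    using False by (simp add: n_def inner_commute power2_norm_eq_inner[symmetric] power2_eq_square)
  ultimately show ?thesis by simp
qed

lemma ac_convex:
  fixes f :: "real \<Rightarrow> 'a::euclidean_space"
  assumes ac: "abs_cont_on a b f" and ab: "a < b" and N: "negligible N"
    and C: "convex C" "closed C"
    and der: "\<And>t. t \<in> {a..b} - N \<Longrightarrow> \<exists>v. (f has_vector_derivative v) (at t within {a..b}) \<and> v \<in> C"
  shows "(1 / (b - a)) *\<^sub>R (f b - f a) \<in> C"
proof (rule ccontr)
  assume nz: "(1 / (b - a)) *\<^sub>R (f b - f a) \<notin> C"
  obtain c \<beta> where c: "c \<bullet> ((1 / (b - a)) *\<^sub>R (f b - f a)) < \<beta>" "\<forall>x\<in>C. \<beta> < c \<bullet> x"
    using separating_hyperplane_closed_point[OF C nz] by blast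
  have "(f b - f a) \<bullet> (- c) \<le> (- \<beta>) * (b - a)"
  proof (rule ac_mv[OF ac _ N])
    show "a \<le> b" using ab by simp
    fix t assume t: "t \<in> {a..b} - N"
    then obtain v where v: "(f has_vector_derivative v) (at t within {a..b})" "v \<in> C"
      using der by blast
    have "\<beta> < c \<bullet> v" using c(2) v(2) by blast
    then have "v \<bullet> (- c) \<le> - \<beta>" by (simp add: inner_commute)
    then show "\<exists>v. (f has_vector_derivative v) (at t within {a..b}) \<and> v \<bullet> (- c) \<le> - \<beta>" using v by blast
  qed
  then have "\<beta> * (b - a) \<le> c \<bullet> (f b - f a)" by (simp add: inner_commute)
  moreover have "c \<bullet> ((1 / (b - a)) *\<^sub>R (f b - f a)) = (c \<bullet> (f b - f a)) / (b - a)"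
    by (simp only: inner_scaleR_right) simp
  ultimately have "\<beta> \<le> c \<bullet> ((1 / (b - a)) *\<^sub>R (f b - f a))"
    using ab by (simp add: pos_le_divide_eq)
  then show False using c(1) by simp
qed

locale lipG =
  fixes G :: "'a::euclidean_space \<Rightarrow> 'a set" and L :: real
  assumes ne: "\<And>x. G x \<noteq> {}" and cvx: "\<And>x. convex (G x)" and cpt: "\<And>x. compact (G x)"
    and lip: "\<And>x y. hausdist (G x) (G y) \<le> L * dist x y" and Lpos: "L > 0"
begin

lemma cl: "closed (G x)" using cpt compact_imp_closed by blast

lemma haus1:
  assumes "v \<in> G x" shows "infdist v (G y) \<le> L * dist x y"
proof -
  have bdd: "bdd_above ((\<lambda>a. infdist a (G y)) ` G x)"
  proof -
    have "compact ((\<lambda>a. infdist a (G y)) ` G x)"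
      by (rule compact_continuous_image[OF _ cpt]) (intro continuous_intros)
    then show ?thesis by (intro bounded_imp_bdd_above compact_imp_bounded)
  qed
  have "infdist v (G y) \<le> (SUP a\<in>G x. infdist a (G y))"
    by (rule cSUP_upper[OF assms bdd])
  also have "\<dots> \<le> hausdist (G x) (G y)" unfolding hausdist_def by simp
  also have "\<dots> \<le> L * dist x y" by (rule lip)
  finally show ?thesis .
qed

definition P :: "'a \<Rightarrow> 'a \<Rightarrow> 'a" where "P y w = closest_point (G y) w"

lemma P_in: "P y w \<in> G y" unfolding P_def by (rule closest_point_in_set[OF cl ne])

lemma P_dist: "dist w (P y w) = infdist w (G y)"
  unfolding P_def infdist_eq_setdist by (rule setdist_closest_point[OF cl ne, symmetric])

lemma haus2:
  assumes "v \<in> G x" shows "\<exists>w\<in>G y. dist v w \<le> L * dist x y"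
  using P_in[of y v] P_dist[of v y] haus1[OF assms, of y] by metis

lemma haus3: "infdist w (G y) \<le> infdist w (G x) + L * dist x y"
proof -
  obtain g' where g': "g' \<in> G y" "dist (P x w) g' \<le> L * dist x y"
    using haus2[OF P_in[of x w], of y] by blast
  have "infdist w (G y) \<le> dist w g'" by (rule infdist_le[OF g'(1)])
  also have "\<dots> \<le> dist w (P x w) + dist (P x w) g'" by (rule dist_triangle)
  also have "\<dots> \<le> infdist w (G x) + L * dist x y" using g'(2) P_dist[of w x] by simp
  finally show ?thesis .
qed

end



lemma int_bound:
  fixes f :: "real \<Rightarrow> 'a::euclidean_space"
  assumes f: "continuous_on {a..b} f" and t: "t \<in> {a..b}" and B: "\<And>s. s \<in> {t..b} \<Longrightarrow> norm (f s) \<le> B"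
  shows "norm (integral {t..b} f) \<le> B * (b - t)"
proof -
  have B0: "0 \<le> B" using B[of t] t by (auto intro: order_trans[OF norm_ge_zero])
  have "continuous_on {t..b} f" using f t by (auto intro: continuous_on_subset)
  then have "f integrable_on {t..b}" by (rule integrable_continuous_real)
  then have "(f has_integral integral {t..b} f) (cbox t b)" by (simp add: integrable_integral)
  from has_integral_bound[OF B0 this] B t have "norm (integral {t..b} f) \<le> B * measure lborel (cbox t b)" by auto
  then show ?thesis using t by simp
qed

context lipG begin

lemma P_est: "dist (P x v) (P x' v') \<le> dist v v' + sqrt (L * dist x x' * (infdist v (G x) + infdist v (G x')))"
proof -
  define p where "p = P x v"
  define q where "q = P x' v"
  define h where "h = L * dist x x'"
  have pG: "p \<in> G x" and qG: "q \<in> G x'" by (simp_all add: p_def q_def P_in)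
  obtain p' where p': "p' \<in> G x'" "dist p p' \<le> h" using haus2[OF pG, of x'] h_def by blast
  obtain q' where q': "q' \<in> G x" "dist q q' \<le> h" using haus2[OF qG, of x] h_def by (auto simp: dist_commute)
  have d1: "inner (v - p) (q' - p) \<le> 0" unfolding p_def P_def by (rule closest_point_dot[OF cvx cl q'(1)])
  have d2: "inner (v - q) (p' - q) \<le> 0" unfolding q_def P_def by (rule closest_point_dot[OF cvx cl p'(1)])
  have e1: "inner (v - p) (q - p) \<le> norm (v - p) * h"
  proof -
    have "inner (v - p) (q - p) = inner (v - p) (q' - p) + inner (v - p) (q - q')"
      by (simp add: inner_diff_right)
    also have "\<dots> \<le> 0 + norm (v - p) * norm (q - q')"
      using d1 norm_cauchy_schwarz[of "v - p" "q - q'"] by linarith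
    also have "\<dots> \<le> norm (v - p) * h" using q'(2) by (simp add: dist_norm mult_left_mono)
    finally show ?thesis .
  qed
  have e2: "inner (v - q) (p - q) \<le> norm (v - q) * h"
  proof -
    have "inner (v - q) (p - q) = inner (v - q) (p' - q) + inner (v - q) (p - p')"
      by (simp add: inner_diff_right)
    also have "\<dots> \<le> 0 + norm (v - q) * norm (p - p')"
      using d2 norm_cauchy_schwarz[of "v - q" "p - p'"] by linarith
    also have "\<dots> \<le> norm (v - q) * h" using p'(2) by (simp add: dist_norm mult_left_mono)
    finally show ?thesis .
  qed
  have "(norm (p - q))\<^sup>2 = inner (v - q) (p - q) + inner (v - p) (q - p)"
    by (simp add: power2_norm_eq_inner inner_diff_left inner_diff_right inner_commute algebra_simps)
  also have "\<dots> \<le> h * (norm (v - p) + norm (v - q))" using e1 e2 by (simp add: algebra_simps)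
  also have "\<dots> = L * dist x x' * (infdist v (G x) + infdist v (G x'))"
    using P_dist[of v x] P_dist[of v x'] by (simp add: h_def p_def q_def dist_norm)
  finally have "norm (p - q) \<le> sqrt (L * dist x x' * (infdist v (G x) + infdist v (G x')))"
    by (rule real_le_rsqrt)
  then have A: "dist (P x v) (P x' v) \<le> sqrt (L * dist x x' * (infdist v (G x) + infdist v (G x')))"
    by (simp add: p_def q_def dist_norm)
  have B: "dist (P x' v) (P x' v') \<le> dist v v'"
    unfolding P_def by (rule closest_point_lipschitz[OF cvx cl ne])
  have "dist (P x v) (P x' v') \<le> dist (P x v) (P x' v) + dist (P x' v) (P x' v')" by (rule dist_triangle)
  then show ?thesis using A B by linarith
qed

lemma P_cont:
  assumes x: "continuous_on S x" and w: "continuous_on S w"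
  shows "continuous_on S (\<lambda>t. P (x t) (w t))"
  unfolding continuous_on_def
proof
  fix t assume t: "t \<in> S"
  define g where "g s = dist (w s) (w t) + sqrt (L * dist (x s) (x t) * (2 * infdist (w s) (G (x t)) + L * dist (x s) (x t)))" for s
  have xt: "(x \<longlongrightarrow> x t) (at t within S)" and wt: "(w \<longlongrightarrow> w t) (at t within S)"
    using x w t unfolding continuous_on_def by blast+
  have "(g \<longlongrightarrow> dist (w t) (w t) + sqrt (L * dist (x t) (x t) * (2 * infdist (w t) (G (x t)) + L * dist (x t) (x t)))) (at t within S)"
    unfolding g_def
    by (rule tendsto_add[OF tendsto_dist[OF wt tendsto_const] tendsto_real_sqrt[OF tendsto_mult[OF tendsto_mult[OF tendsto_const tendsto_dist[OF xt tendsto_const]] tendsto_add[OF tendsto_mult[OF tendsto_const tendsto_infdist[OF wt]] tendsto_mult[OF tendsto_const tendsto_dist[OF xt tendsto_const]]]]]])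
  then have g0: "(g \<longlongrightarrow> 0) (at t within S)" by simp
  have le: "dist (P (x s) (w s)) (P (x t) (w t)) \<le> g s" for s
  proof -
    have "dist (P (x s) (w s)) (P (x t) (w t)) \<le> dist (w s) (w t) + sqrt (L * dist (x s) (x t) * (infdist (w s) (G (x s)) + infdist (w s) (G (x t))))"
      by (rule P_est)
    also have "\<dots> \<le> g s"
    proof -
      have h: "infdist (w s) (G (x s)) \<le> infdist (w s) (G (x t)) + L * dist (x t) (x s)" by (rule haus3)
      have h2: "infdist (w s) (G (x s)) + infdist (w s) (G (x t)) \<le> 2 * infdist (w s) (G (x t)) + L * dist (x s) (x t)"
        using h by (simp add: dist_commute)
      have "L * dist (x s) (x t) * (infdist (w s) (G (x s)) + infdist (w s) (G (x t)))
          \<le> L * dist (x s) (x t) * (2 * infdist (w s) (G (x t)) + L * dist (x s) (x t))"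
        by (rule mult_left_mono[OF h2]) (use Lpos in simp)
      then have "sqrt (L * dist (x s) (x t) * (infdist (w s) (G (x s)) + infdist (w s) (G (x t))))
          \<le> sqrt (L * dist (x s) (x t) * (2 * infdist (w s) (G (x t)) + L * dist (x s) (x t)))"
        by (rule real_sqrt_le_mono)
      then show ?thesis unfolding g_def by (rule add_left_mono)
    qed
    finally show ?thesis .
  qed
  show "((\<lambda>s. P (x s) (w s)) \<longlongrightarrow> P (x t) (w t)) (at t within S)"
  proof (rule tendsto_dist_iff[THEN iffD2], rule tendsto_sandwich[OF _ _ tendsto_const g0])
    show "\<forall>\<^sub>F s in at t within S. 0 \<le> dist (P (x s) (w s)) (P (x t) (w t))" by simp
    show "\<forall>\<^sub>F s in at t within S. dist (P (x s) (w s)) (P (x t) (w t)) \<le> g s"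
      by (rule always_eventually) (simp add: le)
  qed
qed

end



lemma int_split:
  fixes f :: "real \<Rightarrow> 'a::euclidean_space"
  assumes f: "continuous_on {a..b} f" and t: "t \<in> {a..b}"
  shows "integral {t..b} f = integral {a..b} f - integral {a..t} f"
proof -
  have "f integrable_on {a..b}" by (rule integrable_continuous_real[OF f])
  then have "integral {a..t} f + integral {t..b} f = integral {a..b} f"
    using t by (intro Henstock_Kurzweil_Integration.integral_combine) auto
  then show ?thesis by (simp add: algebra_simps)
qed

lemma int_diff:
  fixes f g :: "real \<Rightarrow> 'a::euclidean_space"
  assumes f: "continuous_on {a..b} f" and g: "continuous_on {a..b} g" and t: "t \<in> {a..b}"
  shows "integral {t..b} (\<lambda>s. f s - g s) = integral {t..b} f - integral {t..b} g"
proof -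
  have "continuous_on {t..b} f" "continuous_on {t..b} g" using f g t by (auto intro: continuous_on_subset)
  then have "f integrable_on {t..b}" "g integrable_on {t..b}" by (auto intro: integrable_continuous_real)
  then show ?thesis by (rule Henstock_Kurzweil_Integration.integral_diff)
qed

lemma cont_int_tail:
  fixes f :: "real \<Rightarrow> 'a::euclidean_space"
  assumes f: "continuous_on {a..b} f"
  shows "continuous_on {a..b} (\<lambda>t. integral {t..b} f)"
  by (rule indefinite_integral_continuous_1'[OF integrable_continuous_real[OF f]])

context lipG begin

lemma CF:
  assumes ab: "a < b" and hL: "L * (b - a) \<le> 1/2" and rho0: "\<rho> \<ge> 0"
    and rho: "\<And>t. t \<in> {a..b} \<Longrightarrow> infdist u (G (q - (b - t) *\<^sub>R u)) \<le> \<rho>"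
  shows "\<exists>x W. continuous_on {a..b} W \<and>
     (\<forall>t\<in>{a..b}. (x has_vector_derivative W t) (at t within {a..b}) \<and> W t \<in> G (x t)) \<and>
     x b = z \<and> norm (x a - (q - (b - a) *\<^sub>R u)) \<le> (1 + 2 * L * (b - a)) * norm (z - q) + 2 * (b - a) * \<rho>"
proof -
  define X where "X = (\<lambda>(Vk::real \<Rightarrow> 'a) t. z - integral {t..b} Vk)"
  define V where "V = rec_nat (\<lambda>t. u) (\<lambda>k Vk t. P (X Vk t) (Vk t))"
  have V0: "V 0 = (\<lambda>t. u)" by (simp add: V_def)
  have VS: "V (Suc k) = (\<lambda>t. P (X (V k) t) (V k t))" for k by (simp add: V_def)
  have contX: "continuous_on {a..b} (X f)" if "continuous_on {a..b} f" for f
    unfolding X_def by (intro continuous_intros cont_int_tail that)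
  have contV: "continuous_on {a..b} (V k)" for k
  proof (induction k)
    case 0 then show ?case by (simp add: V0)
  next
    case (Suc k)
    show ?case unfolding VS by (rule P_cont[OF contX[OF Suc] Suc])
  qed
  define \<rho>' where "\<rho>' = \<rho> + L * norm (z - q)"
  have rho'0: "\<rho>' \<ge> 0" using rho0 Lpos by (simp add: \<rho>'_def)
  have ab': "a \<le> b" using ab by simp
  have bnd: "norm (V (Suc k) t - V k t) \<le> \<rho>' / 2 ^ k" if "t \<in> {a..b}" for k t
    using that
  proof (induction k arbitrary: t)
    case 0
    have X0: "X (V 0) t = z - (b - t) *\<^sub>R u" using 0 by (simp add: X_def V0)
    have "norm (V (Suc 0) t - V 0 t) = dist u (P (X (V 0) t) u)"
      by (simp add: VS V0 dist_norm norm_minus_commute)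
    also have "\<dots> = infdist u (G (X (V 0) t))" by (rule P_dist)
    also have "\<dots> \<le> infdist u (G (q - (b - t) *\<^sub>R u)) + L * dist (q - (b - t) *\<^sub>R u) (X (V 0) t)"
      by (rule haus3)
    also have "\<dots> \<le> \<rho> + L * norm (z - q)"
      using rho[OF 0] X0 by (simp add: dist_norm norm_minus_commute)
    finally show ?case by (simp add: \<rho>'_def)
  next
    case (Suc k)
    have tb: "t \<le> b" "a \<le> t" using Suc.prems by auto
    have mem: "V (Suc k) t \<in> G (X (V k) t)" by (simp add: VS P_in)
    have "norm (V (Suc (Suc k)) t - V (Suc k) t) = dist (V (Suc k) t) (P (X (V (Suc k)) t) (V (Suc k) t))"
      by (simp only: VS[of "Suc k"] dist_norm norm_minus_commute)
    also have "\<dots> = infdist (V (Suc k) t) (G (X (V (Suc k)) t))" by (rule P_dist)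
    also have "\<dots> \<le> infdist (V (Suc k) t) (G (X (V k) t)) + L * dist (X (V k) t) (X (V (Suc k)) t)"
      by (rule haus3)
    also have "\<dots> = L * norm (integral {t..b} (\<lambda>s. V (Suc k) s - V k s))"
    proof -
      have "X (V k) t - X (V (Suc k)) t = integral {t..b} (\<lambda>s. V (Suc k) s - V k s)"
        using int_diff[OF contV contV Suc.prems, of "Suc k" k] by (simp add: X_def)
      then show ?thesis using mem by (simp add: dist_norm)
    qed
    also have "\<dots> \<le> L * ((\<rho>' / 2 ^ k) * (b - t))"
    proof -
      have "norm (integral {t..b} (\<lambda>s. V (Suc k) s - V k s)) \<le> (\<rho>' / 2 ^ k) * (b - t)"
      proof (rule int_bound[OF _ Suc.prems])
        show "continuous_on {a..b} (\<lambda>s. V (Suc k) s - V k s)" by (intro continuous_intros contV)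
        fix s assume "s \<in> {t..b}"
        then have "s \<in> {a..b}" using tb by auto
        then show "norm (V (Suc k) s - V k s) \<le> \<rho>' / 2 ^ k" by (rule Suc.IH)
      qed
      then show ?thesis by (rule mult_left_mono) (use Lpos in simp)
    qed
    also have "\<dots> \<le> (\<rho>' / 2 ^ k) * (L * (b - a))"
    proof -
      have "L * (b - t) \<le> L * (b - a)" using Lpos tb by (simp add: mult_left_mono)
      then have "(\<rho>' / 2 ^ k) * (L * (b - t)) \<le> (\<rho>' / 2 ^ k) * (L * (b - a))"
        by (rule mult_left_mono) (use rho'0 in simp)
      then show ?thesis by (simp add: algebra_simps)
    qed
    also have "\<dots> \<le> (\<rho>' / 2 ^ k) * (1/2)"
      by (rule mult_left_mono[OF hL]) (use rho'0 in simp)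
    also have "\<dots> = \<rho>' / 2 ^ Suc k" by simp
    finally show ?case .
  qed
  define d where "d j t = V (Suc j) t - V j t" for j t
  have summ: "summable (\<lambda>j. \<rho>' * (1/2) ^ j)"
    by (intro summable_mult summable_geometric) simp
  have ul0: "uniform_limit {a..b} (\<lambda>n t. \<Sum>i<n. d i t) (\<lambda>t. suminf (\<lambda>i. d i t)) sequentially"
  proof (rule Weierstrass_m_test[OF _ summ])
    fix n t assume "t \<in> {a..b}"
    then show "norm (d n t) \<le> \<rho>' * (1/2) ^ n" using bnd[of t n] by (simp add: d_def power_one_over)
  qed
  define W where "W t = u + suminf (\<lambda>i. d i t)" for t
  have Vsum: "V n t = u + (\<Sum>i<n. d i t)" for n t
    using sum_lessThan_telescope[of "\<lambda>i. V i t" n] by (simp add: d_def V0)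
  have ul: "uniform_limit {a..b} V W sequentially"
  proof -
    have "uniform_limit {a..b} (\<lambda>n t. u + (\<Sum>i<n. d i t)) (\<lambda>t. u + suminf (\<lambda>i. d i t)) sequentially"
      by (rule uniform_limit_add[OF uniform_limit_const ul0])
    then show ?thesis by (simp add: Vsum[abs_def] W_def[abs_def])
  qed
  have contW: "continuous_on {a..b} W"
    by (rule uniform_limit_theorem[OF _ ul]) (auto intro: always_eventually contV)
  define x where "x t = X W t" for t
  have xb: "x b = z" by (simp add: x_def X_def)
  have deriv: "(x has_vector_derivative W t) (at t within {a..b})" if t: "t \<in> {a..b}" for t
  proof -
    have "((\<lambda>s. z - integral {a..b} W + integral {a..s} W) has_vector_derivative W t) (at t within {a..b})"
      using has_vector_derivative_add[OF has_vector_derivative_const[of "z - integral {a..b} W"] integral_has_vector_derivative[OF contW t]]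
      by simp
    then show ?thesis
    proof (rule has_vector_derivative_transform[OF t, rotated])
      fix s assume s: "s \<in> {a..b}"
      have eq: "integral {s..b} W = integral {a..b} W - integral {a..s} W" by (rule int_split[OF contW s])
      show "x s = z - integral {a..b} W + integral {a..s} W" by (simp add: x_def X_def eq)
    qed
  qed
  have memW: "W t \<in> G (x t)" if t: "t \<in> {a..b}" for t
  proof -
    have "infdist (W t) (G (x t)) \<le> \<epsilon>" if e: "\<epsilon> > 0" for \<epsilon>
    proof -
      define \<epsilon>' where "\<epsilon>' = \<epsilon> / (L * (b - a) + 1)"
      have den: "L * (b - a) + 1 > 0" using Lpos ab by (simp add: add_pos_pos)
      have e': "\<epsilon>' > 0" using e den by (simp add: \<epsilon>'_def)
      have e'2: "\<epsilon>' * (L * (b - a) + 1) = \<epsilon>" using den by (simp add: \<epsilon>'_def)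
      have "\<exists>N. \<forall>n\<ge>N. \<forall>t\<in>{a..b}. dist (V n t) (W t) < \<epsilon>'"
        using ul e' unfolding uniform_limit_sequentially_iff by blast
      then obtain N where N0: "\<forall>n\<ge>N. \<forall>t\<in>{a..b}. dist (V n t) (W t) < \<epsilon>'" by blast
      have N: "dist (V n s) (W s) < \<epsilon>'" if "n \<ge> N" "s \<in> {a..b}" for n s
        using N0 that by blast
      have mem: "V (Suc N) t \<in> G (X (V N) t)" by (simp add: VS P_in)
      have "infdist (W t) (G (x t)) \<le> infdist (V (Suc N) t) (G (x t)) + dist (W t) (V (Suc N) t)"
        by (rule infdist_triangle)
      also have "\<dots> \<le> (infdist (V (Suc N) t) (G (X (V N) t)) + L * dist (X (V N) t) (x t)) + \<epsilon>'"
        using haus3[of "V (Suc N) t" "x t" "X (V N) t"] N[of "Suc N" t] t by (simp add: dist_commute)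
      also have "\<dots> = L * norm (integral {t..b} (\<lambda>s. W s - V N s)) + \<epsilon>'"
      proof -
        have "X (V N) t - x t = integral {t..b} (\<lambda>s. W s - V N s)"
          using int_diff[OF contW contV t, of N] by (simp add: X_def x_def)
        then show ?thesis using mem by (simp add: dist_norm)
      qed
      also have "\<dots> \<le> L * (\<epsilon>' * (b - t)) + \<epsilon>'"
      proof -
        have "norm (integral {t..b} (\<lambda>s. W s - V N s)) \<le> \<epsilon>' * (b - t)"
        proof (rule int_bound[OF _ t])
          show "continuous_on {a..b} (\<lambda>s. W s - V N s)" by (intro continuous_intros contV contW)
          fix s assume "s \<in> {t..b}"
          then have "s \<in> {a..b}" using t by auto
          then show "norm (W s - V N s) \<le> \<epsilon>'" using N[of N s] by (simp add: dist_norm norm_minus_commute)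
        qed
        then have "L * norm (integral {t..b} (\<lambda>s. W s - V N s)) \<le> L * (\<epsilon>' * (b - t))"
          by (rule mult_left_mono) (use Lpos in simp)
        then show ?thesis by simp
      qed
      also have "\<dots> \<le> \<epsilon>' * (L * (b - a) + 1)"
      proof -
        have "L * (\<epsilon>' * (b - t)) \<le> L * (\<epsilon>' * (b - a))"
          using Lpos e' t by (intro mult_left_mono) auto
        then show ?thesis by (simp add: algebra_simps)
      qed
      also have "\<dots> = \<epsilon>" by (rule e'2)
      finally show ?thesis .
    qed
    then have "infdist (W t) (G (x t)) \<le> 0" by (rule field_le_epsilon) simp
    then have "infdist (W t) (G (x t)) = 0" using infdist_nonneg[of "W t" "G (x t)"] by linarith
    then show ?thesis using in_closed_iff_infdist_zero[OF cl ne] by blast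
  qed
  have Wb: "norm (W t - u) \<le> 2 * \<rho>'" if t: "t \<in> {a..b}" for t
  proof -
    have lim: "(\<lambda>n. norm (V n t - u)) \<longlonglongrightarrow> norm (W t - u)"
      by (intro tendsto_intros tendsto_uniform_limitI[OF ul t])
    have "norm (V n t - u) \<le> 2 * \<rho>'" for n
    proof -
      have "norm (V n t - u) = norm (\<Sum>i<n. d i t)" by (simp add: Vsum)
      also have "\<dots> \<le> (\<Sum>i<n. norm (d i t))" by (rule norm_sum)
      also have "\<dots> \<le> (\<Sum>i<n. \<rho>' * (1/2) ^ i)"
        using bnd[OF t] by (intro sum_mono) (simp add: d_def power_one_over)
      also have "\<dots> \<le> (\<Sum>i. \<rho>' * (1/2) ^ i)"
        using rho'0 by (intro sum_le_suminf[OF summ]) auto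
      also have "\<dots> = 2 * \<rho>'"
        using suminf_mult[of "\<lambda>i. (1/2::real) ^ i" \<rho>'] suminf_geometric[of "1/2::real"] by simp
      finally show ?thesis .
    qed
    then show ?thesis using lim by (intro tendsto_upperbound[OF lim]) (auto intro: always_eventually)
  qed
  show ?thesis
  proof (intro exI conjI ballI)
    show "continuous_on {a..b} W" by (rule contW)
    fix t assume t: "t \<in> {a..b}"
    show "(x has_vector_derivative W t) (at t within {a..b})" by (rule deriv[OF t])
    show "W t \<in> G (x t)" by (rule memW[OF t])
  next
    show "x b = z" by (rule xb)
  next
    have xa: "x a - (q - (b - a) *\<^sub>R u) = (z - q) - integral {a..b} (\<lambda>s. W s - u)"
    proof -
      have "integral {a..b} (\<lambda>s. W s - u) = integral {a..b} W - integral {a..b} (\<lambda>s. u)"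
        using int_diff[OF contW continuous_on_const, of a u] ab by simp
      then show ?thesis using ab by (simp add: x_def X_def algebra_simps)
    qed
    have "norm (integral {a..b} (\<lambda>s. W s - u)) \<le> (2 * \<rho>') * (b - a)"
    proof (rule int_bound)
      show "continuous_on {a..b} (\<lambda>s. W s - u)" by (intro continuous_intros contW)
      show "a \<in> {a..b}" using ab by simp
      fix s assume "s \<in> {a..b}" then show "norm (W s - u) \<le> 2 * \<rho>'" by (rule Wb)
    qed
    then have "norm (x a - (q - (b - a) *\<^sub>R u)) \<le> norm (z - q) + (2 * \<rho>') * (b - a)"
      unfolding xa using norm_triangle_ineq4[of "z - q" "integral {a..b} (\<lambda>s. W s - u)"] by linarith
    also have "\<dots> = (1 + 2 * L * (b - a)) * norm (z - q) + 2 * (b - a) * \<rho>"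
      by (simp add: \<rho>'_def algebra_simps)
    finally show "norm (x a - (q - (b - a) *\<^sub>R u)) \<le> (1 + 2 * L * (b - a)) * norm (z - q) + 2 * (b - a) * \<rho>" .
  qed
qed

end



lemma lip_ac:
  fixes x :: "real \<Rightarrow> 'a::euclidean_space"
  assumes M: "\<And>s t. s \<in> {a..b} \<Longrightarrow> t \<in> {a..b} \<Longrightarrow> norm (x s - x t) \<le> M * \<bar>s - t\<bar>"
  shows "abs_cont_on a b x"
  unfolding abs_cont_on_def
proof (intro allI impI)
  fix e :: real assume e: "e > 0"
  define M' where "M' = \<bar>M\<bar> + 1"
  have M': "M' > 0" by (simp add: M'_def add_nonneg_pos)
  show "\<exists>d>0. \<forall>(n::nat) (aa::nat \<Rightarrow> real) bb.
        (\<forall>i<n. a \<le> aa i \<and> aa i \<le> bb i \<and> bb i \<le> b) \<and>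
        (\<forall>i<n. \<forall>j<n. i \<noteq> j \<longrightarrow> bb i \<le> aa j \<or> bb j \<le> aa i) \<and>
        (\<Sum>i<n. bb i - aa i) < d \<longrightarrow> (\<Sum>i<n. norm (x (bb i) - x (aa i))) < e"
  proof (intro exI[of _ "e / M'"] conjI allI impI)
    show "e / M' > 0" using e M' by simp
    fix n :: nat and aa bb :: "nat \<Rightarrow> real"
    assume A: "(\<forall>i<n. a \<le> aa i \<and> aa i \<le> bb i \<and> bb i \<le> b) \<and>
        (\<forall>i<n. \<forall>j<n. i \<noteq> j \<longrightarrow> bb i \<le> aa j \<or> bb j \<le> aa i) \<and>
        (\<Sum>i<n. bb i - aa i) < e / M'"
    have "(\<Sum>i<n. norm (x (bb i) - x (aa i))) \<le> (\<Sum>i<n. M' * (bb i - aa i))"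
    proof (rule sum_mono)
      fix i assume "i \<in> {..<n}"
      then have i: "a \<le> aa i" "aa i \<le> bb i" "bb i \<le> b" using A by auto
      have "bb i \<in> {a..b}" "aa i \<in> {a..b}" using i by auto
      then have "norm (x (bb i) - x (aa i)) \<le> M * \<bar>bb i - aa i\<bar>" by (rule M)
      also have "\<dots> \<le> M' * (bb i - aa i)" using i by (simp add: M'_def mult_right_mono)
      finally show "norm (x (bb i) - x (aa i)) \<le> M' * (bb i - aa i)" .
    qed
    also have "\<dots> = M' * (\<Sum>i<n. bb i - aa i)" by (simp add: sum_distrib_left)
    also have "\<dots> < M' * (e / M')" using A M' by (intro mult_strict_left_mono) auto
    also have "\<dots> = e" using M' by simp
    finally show "(\<Sum>i<n. norm (x (bb i) - x (aa i))) < e" .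
  qed
qed

context lipG begin

definition ptraj :: "real \<Rightarrow> real \<Rightarrow> (real \<Rightarrow> 'a) \<Rightarrow> bool" where
  "ptraj a b x \<longleftrightarrow> a \<le> b \<and> (\<exists>M. \<forall>s\<in>{a..b}. \<forall>t\<in>{a..b}. norm (x s - x t) \<le> M * \<bar>s - t\<bar>) \<and>
     (\<exists>N. negligible N \<and> (\<forall>t\<in>{a..b} - N. \<exists>v. (x has_vector_derivative v) (at t within {a..b}) \<and> v \<in> G (x t)))"

definition traj :: "real \<Rightarrow> (real \<Rightarrow> 'a) \<Rightarrow> bool" where
  "traj T x \<longleftrightarrow> abs_cont_on 0 T x \<and> (\<exists>N. N \<in> null_sets lebesgue \<and>
      (\<forall>t\<in>{0..T} - N. \<exists>v. (x has_vector_derivative v) (at t within {0..T}) \<and> v \<in> G (x t)))"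

lemma Sol_eq: "Sol G T t0 x0 = {x. traj T x \<and> x t0 = x0}"
  by (auto simp: Sol_def traj_def)

lemma ptraj_traj: "ptraj 0 T x \<Longrightarrow> traj T x"
  unfolding ptraj_def traj_def
  by (auto simp: negligible_iff_null_sets intro: lip_ac)

lemma ptraj_point: "ptraj b b (\<lambda>_. z)"
  unfolding ptraj_def
proof (intro conjI exI)
  show "negligible {b}" by simp
  show "\<forall>t\<in>{b..b} - {b}. \<exists>v. ((\<lambda>_. z) has_vector_derivative v) (at t within {b..b}) \<and> v \<in> G z" by simp
  show "\<forall>s\<in>{b..b}. \<forall>t\<in>{b..b}. norm (z - z) \<le> 0 * \<bar>s - t\<bar>" by simp
qed simp

lemma ptraj_CF:
  assumes ab: "a \<le> b" and W: "continuous_on {a..b} W"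
    and der: "\<And>t. t \<in> {a..b} \<Longrightarrow> (x has_vector_derivative W t) (at t within {a..b}) \<and> W t \<in> G (x t)"
  shows "ptraj a b x"
proof -
  obtain M where M: "\<And>t. t \<in> {a..b} \<Longrightarrow> norm (W t) \<le> M"
  proof -
    have "compact (W ` {a..b})" by (rule compact_continuous_image[OF W compact_Icc])
    then obtain M where "\<forall>y\<in>W ` {a..b}. norm y \<le> M" using compact_imp_bounded bounded_iff by metis
    then show ?thesis by (intro that[of M]) blast
  qed
  show ?thesis
  unfolding ptraj_def
proof (intro conjI exI)
  show "a \<le> b" by (rule ab)
  show "\<forall>s\<in>{a..b}. \<forall>t\<in>{a..b}. norm (x s - x t) \<le> M * \<bar>s - t\<bar>"
  proof (intro ballI)
    fix s t assume s: "s \<in> {a..b}" and t: "t \<in> {a..b}"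
    have "norm (x s - x t) \<le> M * norm (s - t)"
    proof (rule differentiable_bound[of "{a..b}" x "\<lambda>t h. h *\<^sub>R W t"])
      show "convex {a..b}" by simp
      fix y assume y: "y \<in> {a..b}"
      show "(x has_derivative (\<lambda>h. h *\<^sub>R W y)) (at y within {a..b})"
        using der[OF y] by (simp add: has_vector_derivative_def)
      have "onorm (\<lambda>h::real. h *\<^sub>R W y) = onorm (\<lambda>h::real. h) * norm (W y)"
        by (rule onorm_scaleR_left) simp
      also have "\<dots> = norm (W y)" by (simp add: onorm_id)
      finally show "onorm (\<lambda>h::real. h *\<^sub>R W y) \<le> M" using M[OF y] by simp
    qed (use s t in auto)
    then show "norm (x s - x t) \<le> M * \<bar>s - t\<bar>" by simp
  qed
  show "negligible {}" by simp
  show "\<forall>t\<in>{a..b} - {}. \<exists>v. (x has_vector_derivative v) (at t within {a..b}) \<and> v \<in> G (x t)"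
    using der by blast
qed
qed

lemma ptraj_glue:
  assumes p1: "ptraj a c x1" and p2: "ptraj c b x2" and eq: "x1 c = x2 c"
  shows "ptraj a b (\<lambda>t. if t \<le> c then x1 t else x2 t)" (is "ptraj a b ?g")
proof -
  have ac: "a \<le> c" and cb: "c \<le> b" using p1 p2 by (auto simp: ptraj_def)
  have "\<exists>M1. \<forall>s\<in>{a..c}. \<forall>t\<in>{a..c}. norm (x1 s - x1 t) \<le> M1 * \<bar>s - t\<bar>"
    using p1 unfolding ptraj_def by blast
  then obtain M1 where M1: "\<And>s t. s \<in> {a..c} \<Longrightarrow> t \<in> {a..c} \<Longrightarrow> norm (x1 s - x1 t) \<le> M1 * \<bar>s - t\<bar>"
    by blast
  have "\<exists>M2. \<forall>s\<in>{c..b}. \<forall>t\<in>{c..b}. norm (x2 s - x2 t) \<le> M2 * \<bar>s - t\<bar>"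
    using p2 unfolding ptraj_def by blast
  then obtain M2 where M2: "\<And>s t. s \<in> {c..b} \<Longrightarrow> t \<in> {c..b} \<Longrightarrow> norm (x2 s - x2 t) \<le> M2 * \<bar>s - t\<bar>"
    by blast
  obtain N1 where N1: "negligible N1" "\<And>t. t \<in> {a..c} - N1 \<Longrightarrow> \<exists>v. (x1 has_vector_derivative v) (at t within {a..c}) \<and> v \<in> G (x1 t)"
    using p1 unfolding ptraj_def by blast
  obtain N2 where N2: "negligible N2" "\<And>t. t \<in> {c..b} - N2 \<Longrightarrow> \<exists>v. (x2 has_vector_derivative v) (at t within {c..b}) \<and> v \<in> G (x2 t)"
    using p2 unfolding ptraj_def by blast
  define M where "M = max (max M1 M2) 0"
  have M1': "norm (x1 s - x1 t) \<le> M * \<bar>s - t\<bar>" if "s \<in> {a..c}" "t \<in> {a..c}" for s t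
    using M1[OF that] by (smt (verit, best) M_def abs_ge_zero max.cobounded1 max.cobounded2 mult_right_mono)
  have M2': "norm (x2 s - x2 t) \<le> M * \<bar>s - t\<bar>" if "s \<in> {c..b}" "t \<in> {c..b}" for s t
    using M2[OF that] by (smt (verit, best) M_def abs_ge_zero max.cobounded1 max.cobounded2 mult_right_mono)
  have mixed: "norm (x1 s - x2 t) \<le> M * \<bar>s - t\<bar>" if "s \<in> {a..c}" "t \<in> {c..b}" for s t
  proof -
    have "norm (x1 s - x2 t) \<le> norm (x1 s - x1 c) + norm (x2 c - x2 t)"
      using eq norm_triangle_ineq[of "x1 s - x1 c" "x2 c - x2 t"] by simp
    also have "\<dots> \<le> M * \<bar>s - c\<bar> + M * \<bar>c - t\<bar>"
      using M1'[of s c] M2'[of c t] that ac cb by auto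
    also have "\<dots> = M * \<bar>s - t\<bar>" using that by (simp add: algebra_simps abs_if)
    finally show ?thesis .
  qed
  show ?thesis
    unfolding ptraj_def
  proof (intro conjI exI)
    show "a \<le> b" using ac cb by simp
    show "\<forall>s\<in>{a..b}. \<forall>t\<in>{a..b}. norm (?g s - ?g t) \<le> M * \<bar>s - t\<bar>"
    proof (intro ballI)
      fix s t assume s: "s \<in> {a..b}" and t: "t \<in> {a..b}"
      show "norm (?g s - ?g t) \<le> M * \<bar>s - t\<bar>"
      proof (cases "s \<le> c"; cases "t \<le> c")
        assume "s \<le> c" "t \<le> c" then show ?thesis using M1'[of s t] s t by auto
      next
        assume "s \<le> c" "\<not> t \<le> c" then show ?thesis using mixed[of s t] s t by auto
      next
        assume "\<not> s \<le> c" "t \<le> c" then show ?thesis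
          using mixed[of t s] s t by (auto simp: norm_minus_commute abs_minus_commute)
      next
        assume "\<not> s \<le> c" "\<not> t \<le> c" then show ?thesis using M2'[of s t] s t by auto
      qed
    qed
    show "negligible (N1 \<union> N2 \<union> {a, c, b})" using N1(1) N2(1) by simp
    show "\<forall>t\<in>{a..b} - (N1 \<union> N2 \<union> {a, c, b}). \<exists>v. (?g has_vector_derivative v) (at t within {a..b}) \<and> v \<in> G (?g t)"
    proof
      fix t assume t: "t \<in> {a..b} - (N1 \<union> N2 \<union> {a, c, b})"
      show "\<exists>v. (?g has_vector_derivative v) (at t within {a..b}) \<and> v \<in> G (?g t)"
      proof (cases "t < c")
        case True
        then have t1: "t \<in> {a..c} - N1" and ti: "t \<in> {a<..<c}" using t by auto
        obtain v where v: "(x1 has_vector_derivative v) (at t within {a..c})" "v \<in> G (x1 t)"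
          using N2 N1(2)[OF t1] by blast
        have "at t within {a..c} = at t" using ti by (intro at_within_interior) simp
        then have "(x1 has_vector_derivative v) (at t)" using v(1) by simp
        then have "(?g has_vector_derivative v) (at t)"
          by (rule has_vector_derivative_transform_within_open[OF _ open_greaterThanLessThan ti]) auto
        moreover have "?g t = x1 t" using True by simp
        ultimately show ?thesis using v(2) by (intro exI[of _ v]) (auto intro: has_vector_derivative_at_within)
      next
        case False
        then have t1: "t \<in> {c..b} - N2" and ti: "t \<in> {c<..<b}" using t by auto
        obtain v where v: "(x2 has_vector_derivative v) (at t within {c..b})" "v \<in> G (x2 t)"
          using N2(2)[OF t1] by blast
        have "at t within {c..b} = at t" using ti by (intro at_within_interior) simp
        then have "(x2 has_vector_derivative v) (at t)" using v(1) by simp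
        then have "(?g has_vector_derivative v) (at t)"
          by (rule has_vector_derivative_transform_within_open[OF _ open_greaterThanLessThan ti]) auto
        moreover have "?g t = x2 t" using ti by simp
        ultimately show ?thesis using v(2) by (intro exI[of _ v]) (auto intro: has_vector_derivative_at_within)
      qed
    qed
  qed
qed

end



context lipG begin

lemma traj_N:
  assumes "traj T \<eta>"
  obtains N where "negligible N" "\<And>t. t \<in> {0..T} - N \<Longrightarrow> \<exists>v. (\<eta> has_vector_derivative v) (at t within {0..T}) \<and> v \<in> G (\<eta> t)"
  using assms unfolding traj_def negligible_iff_null_sets by blast

lemma traj_ac: "traj T \<eta> \<Longrightarrow> abs_cont_on 0 T \<eta>"
  unfolding traj_def by blast

lemma poly_step:
  assumes tr: "traj T \<eta>" and s: "0 \<le> s" "s + h \<le> T" "h > 0"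
    and osc: "\<And>r r'. r \<in> {s..s+h} \<Longrightarrow> r' \<in> {s..s+h} \<Longrightarrow> norm (\<eta> r - \<eta> r') \<le> \<omega>"
    and t: "t \<in> {s..s+h}"
  shows "infdist ((1/h) *\<^sub>R (\<eta> (s+h) - \<eta> s)) (G (\<eta> (s+h) - (s + h - t) *\<^sub>R ((1/h) *\<^sub>R (\<eta> (s+h) - \<eta> s)))) \<le> 2 * L * \<omega>"
proof -
  obtain N where N: "negligible N" "\<And>t. t \<in> {0..T} - N \<Longrightarrow> \<exists>v. (\<eta> has_vector_derivative v) (at t within {0..T}) \<and> v \<in> G (\<eta> t)"
    using traj_N[OF tr] by blast
  have om: "\<omega> \<ge> 0" using osc[of s s] s by auto
  define C where "C = {g + w | g w. g \<in> G (\<eta> s) \<and> w \<in> cball 0 (L * \<omega>)}"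
  have C_eq: "C = (\<Union>g\<in>G (\<eta> s). \<Union>w\<in>cball 0 (L * \<omega>). {g + w})" unfolding C_def by blast
  have convC: "convex C" unfolding C_eq by (rule convex_sums[OF cvx convex_cball])
  have closC: "closed C" unfolding C_def by (rule compact_imp_closed[OF compact_sums[OF cpt compact_cball]])
  define u where "u = (1/h) *\<^sub>R (\<eta> (s+h) - \<eta> s)"
  have ac: "abs_cont_on s (s+h) \<eta>" by (rule ac_sub[OF traj_ac[OF tr]]) (use s in auto)
  have "(1 / ((s+h) - s)) *\<^sub>R (\<eta> (s+h) - \<eta> s) \<in> C"
  proof (rule ac_convex[OF ac _ N(1) convC closC])
    show "s < s + h" using s by simp
    fix r assume r: "r \<in> {s..s+h} - N"
    then have r0: "r \<in> {0..T} - N" using s by auto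
    obtain v where v: "(\<eta> has_vector_derivative v) (at r within {0..T})" "v \<in> G (\<eta> r)"
      using N(2)[OF r0] by blast
    have v1: "(\<eta> has_vector_derivative v) (at r within {s..s+h})"
      by (rule has_vector_derivative_within_subset[OF v(1)]) (use s in auto)
    obtain g where g: "g \<in> G (\<eta> s)" "dist v g \<le> L * dist (\<eta> r) (\<eta> s)"
      using haus2[OF v(2), of "\<eta> s"] by blast
    have "dist v g \<le> L * \<omega>"
    proof -
      have "dist (\<eta> r) (\<eta> s) \<le> \<omega>" using osc[of r s] r s by (auto simp: dist_norm)
      then have "L * dist (\<eta> r) (\<eta> s) \<le> L * \<omega>" using Lpos by (simp add: mult_left_mono)
      then show ?thesis using g(2) by linarith
    qed
    then have "v - g \<in> cball 0 (L * \<omega>)" by (simp add: dist_norm norm_minus_commute)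
    moreover have "v = g + (v - g)" by simp
    ultimately have "v \<in> C" using g(1) unfolding C_def by blast
    then show "\<exists>v. (\<eta> has_vector_derivative v) (at r within {s..s+h}) \<and> v \<in> C" using v1 by blast
  qed
  then have "u \<in> C" by (simp add: u_def)
  then obtain g w where gw: "u = g + w" "g \<in> G (\<eta> s)" "norm w \<le> L * \<omega>" unfolding C_def by auto
  define p where "p = \<eta> (s+h) - (s + h - t) *\<^sub>R u"
  have pd: "norm (p - \<eta> s) \<le> \<omega>"
  proof -
    define c where "c = (s + h - t) / h"
    have p1: "p = \<eta> (s+h) - c *\<^sub>R (\<eta> (s+h) - \<eta> s)" by (simp add: p_def u_def c_def)
    have p2: "p - \<eta> s = (1 - c) *\<^sub>R (\<eta> (s+h) - \<eta> s)" by (simp add: p1 algebra_simps)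
    have c1: "1 - c = (t - s) / h" using s(3) by (simp add: c_def field_simps)
    have "p - \<eta> s = ((t - s) / h) *\<^sub>R (\<eta> (s+h) - \<eta> s)" using p2 c1 by simp
    then have "norm (p - \<eta> s) = \<bar>(t - s) / h\<bar> * norm (\<eta> (s+h) - \<eta> s)" by simp
    also have "\<dots> \<le> 1 * \<omega>"
    proof (rule mult_mono)
      show "\<bar>(t - s) / h\<bar> \<le> 1" using t s(3) by auto
      show "norm (\<eta> (s+h) - \<eta> s) \<le> \<omega>" using osc[of "s+h" s] s by auto
    qed auto
    finally show ?thesis by simp
  qed
  have "infdist u (G p) \<le> infdist u (G (\<eta> s)) + L * dist (\<eta> s) p" by (rule haus3)
  also have "\<dots> \<le> norm w + L * \<omega>"
  proof (rule add_mono)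
    show "infdist u (G (\<eta> s)) \<le> norm w" using infdist_le[OF gw(2), of u] gw(1) by (simp add: dist_norm)
    show "L * dist (\<eta> s) p \<le> L * \<omega>" using pd Lpos by (simp add: dist_norm norm_minus_commute mult_left_mono)
  qed
  also have "\<dots> \<le> 2 * L * \<omega>" using gw(3) by simp
  finally show ?thesis by (simp add: p_def u_def)
qed

end



context lipG begin

lemma FIL:
  assumes T: "T > 0" and tr: "traj T \<eta>" and e: "\<epsilon> > 0"
  shows "\<exists>\<zeta>. traj T \<zeta> \<and> \<zeta> T = y' \<and> norm (\<zeta> 0 - \<eta> 0) \<le> exp (2 * L * T) * (norm (y' - \<eta> T) + \<epsilon>)"
proof -
  have cont\<eta>: "continuous_on {0..T} \<eta>" by (rule ac_cont[OF traj_ac[OF tr]])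
  have uc: "uniformly_continuous_on {0..T} \<eta>" by (rule compact_uniformly_continuous[OF cont\<eta> compact_Icc])
  define \<omega> where "\<omega> = \<epsilon> / (4 * L * T + 1)"
  have den: "4 * L * T + 1 > 0" using Lpos T by (simp add: add_pos_pos)
  have om: "\<omega> > 0" using e den by (simp add: \<omega>_def)
  have om2: "4 * L * T * \<omega> \<le> \<epsilon>"
  proof -
    have "\<omega> * (4 * L * T + 1) = \<epsilon>" using den by (simp add: \<omega>_def)
    then show ?thesis using om by (simp add: algebra_simps)
  qed
  have "\<exists>d>0. \<forall>r\<in>{0..T}. \<forall>r'\<in>{0..T}. dist r' r < d \<longrightarrow> dist (\<eta> r') (\<eta> r) < \<omega>"
    using uc om unfolding uniformly_continuous_on_def by blast
  then obtain d where d: "d > 0" "\<And>r r'. r \<in> {0..T} \<Longrightarrow> r' \<in> {0..T} \<Longrightarrow> dist r' r < d \<Longrightarrow> dist (\<eta> r') (\<eta> r) < \<omega>"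
    by blast
  define m where "m = nat (ceiling (max (T / d) (2 * L * T))) + 1"
  have mge: "real m \<ge> max (T / d) (2 * L * T) + 1"
  proof -
    have "max (T / d) (2 * L * T) \<le> real (nat (ceiling (max (T / d) (2 * L * T))))"
      by linarith
    then show ?thesis by (simp add: m_def)
  qed
  have m0: "real m > 0" using mge T d Lpos by (smt (verit) divide_pos_pos)
  define h where "h = T / real m"
  have h0: "h > 0" using T m0 by (simp add: h_def)
  have mh: "real m * h = T" using m0 by (simp add: h_def)
  have hd: "h < d"
  proof -
    have "T / d < real m" using mge by simp
    then have "T < d * real m" using d(1) by (simp add: divide_less_eq mult.commute)
    then show ?thesis using m0 by (simp add: h_def divide_less_eq mult.commute)
  qed
  have hL: "L * h \<le> 1/2"
  proof -
    have "2 * L * T \<le> real m" using mge by simp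
    then have le1: "2 * L * T / real m \<le> 1" using m0 by simp
    have eq: "L * h = (2 * L * T / real m) / 2" by (simp add: h_def)
    have "(2 * L * T / real m) / 2 \<le> 1 / 2" by (rule divide_right_mono[OF le1]) simp
    then show ?thesis by (simp only: eq)
  qed
  define \<delta> where "\<delta> = norm (y' - \<eta> T)"
  define \<rho> where "\<rho> = 2 * L * \<omega>"
  have rho0: "\<rho> \<ge> 0" using Lpos om by (simp add: \<rho>_def)
  have claim: "\<exists>\<zeta>. ptraj (T - real k * h) T \<zeta> \<and> \<zeta> T = y' \<and>
      norm (\<zeta> (T - real k * h) - \<eta> (T - real k * h)) \<le> (1 + 2 * L * h) ^ k * (\<delta> + 2 * real k * h * \<rho>)"
    if "k \<le> m" for k
    using that
  proof (induction k)
    case 0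
    show ?case
      by (intro exI[of _ "\<lambda>_. y'"]) (simp add: ptraj_point \<delta>_def)
  next
    case (Suc k)
    then obtain \<zeta> where \<zeta>: "ptraj (T - real k * h) T \<zeta>" "\<zeta> T = y'"
      "norm (\<zeta> (T - real k * h) - \<eta> (T - real k * h)) \<le> (1 + 2 * L * h) ^ k * (\<delta> + 2 * real k * h * \<rho>)"
      by auto
    define a where "a = T - real (Suc k) * h"
    define b where "b = T - real k * h"
    have bah: "b = a + h" by (simp add: a_def b_def algebra_simps)
    have ab: "a < b" using bah h0 by simp
    have a0: "0 \<le> a"
    proof -
      have "real (Suc k) * h \<le> real m * h" using Suc.prems h0 by (intro mult_right_mono) auto
      then show ?thesis using mh by (simp add: a_def)
    qed
    have bT: "b \<le> T" using h0 by (simp add: b_def)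
    have osc: "norm (\<eta> r - \<eta> r') \<le> \<omega>" if "r \<in> {a..a+h}" "r' \<in> {a..a+h}" for r r'
    proof -
      have "r \<in> {0..T}" "r' \<in> {0..T}" using that a0 bT bah by auto
      moreover have "dist r' r < d" using that hd by (auto simp: dist_real_def)
      ultimately have "dist (\<eta> r') (\<eta> r) < \<omega>" by (rule d(2))
      then show ?thesis by (simp add: dist_norm norm_minus_commute)
    qed
    define u where "u = (1/h) *\<^sub>R (\<eta> (a+h) - \<eta> a)"
    have rho: "infdist u (G (\<eta> b - (b - t) *\<^sub>R u)) \<le> \<rho>" if t: "t \<in> {a..b}" for t
    proof -
      have "infdist ((1/h) *\<^sub>R (\<eta> (a+h) - \<eta> a)) (G (\<eta> (a+h) - (a + h - t) *\<^sub>R ((1/h) *\<^sub>R (\<eta> (a+h) - \<eta> a)))) \<le> 2 * L * \<omega>"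
        by (rule poly_step[OF tr a0 _ h0 osc]) (use bT bah t in auto)
      then show ?thesis by (simp add: u_def bah \<rho>_def)
    qed
    have hL': "L * (b - a) \<le> 1/2" using hL bah by simp
    obtain x W where xW: "continuous_on {a..b} W"
      "\<forall>t\<in>{a..b}. (x has_vector_derivative W t) (at t within {a..b}) \<and> W t \<in> G (x t)"
      "x b = \<zeta> b"
      "norm (x a - (\<eta> b - (b - a) *\<^sub>R u)) \<le> (1 + 2 * L * (b - a)) * norm (\<zeta> b - \<eta> b) + 2 * (b - a) * \<rho>"
      using CF[OF ab hL' rho0 rho, of "\<zeta> b"] by blast
    have px: "ptraj a b x" by (rule ptraj_CF) (use ab xW in auto)
    have pz: "ptraj b T \<zeta>" using \<zeta>(1) by (simp add: b_def)
    define \<zeta>' where "\<zeta>' = (\<lambda>t. if t \<le> b then x t else \<zeta> t)"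
    have p': "ptraj a T \<zeta>'" unfolding \<zeta>'_def by (rule ptraj_glue[OF px pz xW(3)])
    have z'T: "\<zeta>' T = y'"
    proof (cases "T \<le> b")
      case True then have "b = T" using bT by simp
      then show ?thesis using True xW(3) \<zeta>(2) by (simp add: \<zeta>'_def)
    next
      case False then show ?thesis using \<zeta>(2) by (simp add: \<zeta>'_def)
    qed
    have ea: "\<eta> b - (b - a) *\<^sub>R u = \<eta> a" using h0 by (simp add: u_def bah)
    have "norm (\<zeta>' a - \<eta> a) = norm (x a - (\<eta> b - (b - a) *\<^sub>R u))" using ab ea by (simp add: \<zeta>'_def)
    also have "\<dots> \<le> (1 + 2 * L * h) * norm (\<zeta> b - \<eta> b) + 2 * h * \<rho>" using xW(4) bah by simp
    also have "\<dots> \<le> (1 + 2 * L * h) * ((1 + 2 * L * h) ^ k * (\<delta> + 2 * real k * h * \<rho>)) + 2 * h * \<rho>"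
    proof -
      have "(1 + 2 * L * h) * norm (\<zeta> b - \<eta> b) \<le> (1 + 2 * L * h) * ((1 + 2 * L * h) ^ k * (\<delta> + 2 * real k * h * \<rho>))"
        by (rule mult_left_mono) (use \<zeta>(3) Lpos h0 in \<open>auto simp: b_def\<close>)
      then show ?thesis by simp
    qed
    also have "\<dots> \<le> (1 + 2 * L * h) ^ Suc k * (\<delta> + 2 * real (Suc k) * h * \<rho>)"
    proof -
      have q1: "1 \<le> (1 + 2 * L * h) ^ Suc k" using Lpos h0 by (intro one_le_power) auto
      have "2 * h * \<rho> \<le> (1 + 2 * L * h) ^ Suc k * (2 * h * \<rho>)"
        using mult_right_mono[OF q1, of "2 * h * \<rho>"] h0 rho0 by simp
      then show ?thesis by (simp add: algebra_simps)
    qed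
    finally have bnd: "norm (\<zeta>' a - \<eta> a) \<le> (1 + 2 * L * h) ^ Suc k * (\<delta> + 2 * real (Suc k) * h * \<rho>)" .
    show ?case using p' z'T bnd by (intro exI[of _ \<zeta>']) (simp add: a_def)
  qed
  obtain \<zeta> where \<zeta>: "ptraj (T - real m * h) T \<zeta>" "\<zeta> T = y'"
    "norm (\<zeta> (T - real m * h) - \<eta> (T - real m * h)) \<le> (1 + 2 * L * h) ^ m * (\<delta> + 2 * real m * h * \<rho>)"
    using claim[of m] by auto
  have tz: "traj T \<zeta>" using \<zeta>(1) mh by (simp add: ptraj_traj)
  have "norm (\<zeta> 0 - \<eta> 0) \<le> (1 + 2 * L * h) ^ m * (\<delta> + 2 * T * \<rho>)"
    using \<zeta>(3) mh by (simp add: mult.assoc)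
  also have "\<dots> \<le> exp (2 * L * T) * (\<delta> + \<epsilon>)"
  proof (rule mult_mono)
    have "(1 + 2 * L * h) ^ m \<le> exp (2 * L * h) ^ m"
      by (rule power_mono) (use Lpos h0 in auto)
    also have "\<dots> = exp (real m * (2 * L * h))" by (simp add: exp_of_nat_mult)
    also have "\<dots> = exp (2 * L * T)" using mh by (simp add: algebra_simps)
    finally show "(1 + 2 * L * h) ^ m \<le> exp (2 * L * T)" .
    show "\<delta> + 2 * T * \<rho> \<le> \<delta> + \<epsilon>" using om2 by (simp add: \<rho>_def algebra_simps)
    show "0 \<le> exp (2 * L * T)" by simp
    show "0 \<le> \<delta> + 2 * T * \<rho>" using T rho0 by (simp add: \<delta>_def)
  qed
  finally show ?thesis using tz \<zeta>(2) by (auto simp: \<delta>_def)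
qed

end



context lipG begin

lemma traj_bound:
  assumes T: "T > 0"
  shows "\<exists>B. \<forall>\<eta>. traj T \<eta> \<longrightarrow> (\<forall>s\<in>{0..T}. \<forall>t\<in>{0..T}. norm (\<eta> s - c) \<le> B * (norm (\<eta> t - c) + 1))"
proof -
  obtain M0 where M0: "M0 \<ge> 0" "\<And>v. v \<in> G c \<Longrightarrow> norm v \<le> M0"
  proof -
    obtain a where "\<forall>x\<in>G c. norm x \<le> a" using compact_imp_bounded[OF cpt] bounded_iff by blast
    then show ?thesis using that[of "max a 0"] by force
  qed
  have Gz: "norm v \<le> M0 + L * norm (z - c)" if vz: "v \<in> G z" for v z
  proof -
    obtain w where w: "w \<in> G c" "dist v w \<le> L * dist z c" using haus2[OF vz, of c] by blast
    have "norm v \<le> norm w + dist v w" by (metis dist_norm norm_triangle_sub add.commute)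
    then show ?thesis using M0(2)[OF w(1)] w(2) by (simp add: dist_norm)
  qed
  define K where "K = M0 / L"
  have K0: "K \<ge> 0" using M0 Lpos by (simp add: K_def)
  have local: "norm (\<eta> s - c) \<le> 2 * norm (\<eta> r - c) + K"
    if tr: "traj T \<eta>" and pq: "0 \<le> p" "p \<le> q" "q \<le> T" "q - p \<le> 1 / (2 * L)"
      and r: "r \<in> {p..q}" and s: "s \<in> {p..q}" for \<eta> p q r s
  proof -
    obtain N where N: "negligible N" "\<And>t. t \<in> {0..T} - N \<Longrightarrow> \<exists>v. (\<eta> has_vector_derivative v) (at t within {0..T}) \<and> v \<in> G (\<eta> t)"
      using traj_N[OF tr] by blast
    have ac: "abs_cont_on 0 T \<eta>" by (rule traj_ac[OF tr])
    have cont: "continuous_on {p..q} (\<lambda>t. norm (\<eta> t - c))"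
      by (intro continuous_intros continuous_on_subset[OF ac_cont[OF ac]]) (use pq in auto)
    obtain s0 where s0: "s0 \<in> {p..q}" "\<And>y. y \<in> {p..q} \<Longrightarrow> norm (\<eta> y - c) \<le> norm (\<eta> s0 - c)"
      using continuous_attains_sup[OF compact_Icc _ cont] pq by auto
    define R where "R = norm (\<eta> s0 - c)"
    have R0: "R \<ge> 0" by (simp add: R_def)
    have mv: "norm (\<eta> y - \<eta> r) \<le> (M0 + L * R) * \<bar>y - r\<bar>" if y: "y \<in> {p..q}" for y
    proof -
      have gen: "norm (\<eta> b - \<eta> a) \<le> (M0 + L * R) * (b - a)" if ab: "a \<le> b" "a \<in> {p..q}" "b \<in> {p..q}" for a b
      proof (rule ac_norm_bound[OF ac_sub[OF ac] ab(1) N(1)])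
        show "0 \<le> a" "b \<le> T" using ab pq by auto
        show "0 \<le> M0 + L * R" using M0 Lpos R0 by simp
        fix t assume t: "t \<in> {a..b} - N"
        then have t0: "t \<in> {0..T} - N" and tpq: "t \<in> {p..q}" using ab pq by auto
        obtain v where v: "(\<eta> has_vector_derivative v) (at t within {0..T})" "v \<in> G (\<eta> t)"
          using N(2)[OF t0] by blast
        have "norm v \<le> M0 + L * norm (\<eta> t - c)" by (rule Gz[OF v(2)])
        also have "\<dots> \<le> M0 + L * R" using s0(2)[OF tpq] Lpos by (simp add: R_def)
        finally have nv: "norm v \<le> M0 + L * R" .
        have "(\<eta> has_vector_derivative v) (at t within {a..b})"
          by (rule has_vector_derivative_within_subset[OF v(1)]) (use ab pq in auto)
        then show "\<exists>v. (\<eta> has_vector_derivative v) (at t within {a..b}) \<and> norm v \<le> M0 + L * R"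
          using nv by blast
      qed
      show ?thesis
      proof (cases "r \<le> y")
        case True then show ?thesis using gen[OF True r y] by simp
      next
        case False then show ?thesis using gen[of y r] r y by (simp add: norm_minus_commute)
      qed
    qed
    have "R \<le> norm (\<eta> r - c) + norm (\<eta> s0 - \<eta> r)"
      unfolding R_def using norm_triangle_ineq[of "\<eta> r - c" "\<eta> s0 - \<eta> r"] by simp
    also have "\<dots> \<le> norm (\<eta> r - c) + (M0 + L * R) * (1 / (2 * L))"
    proof -
      have "\<bar>s0 - r\<bar> \<le> 1 / (2 * L)" using s0(1) r pq by auto
      then have "(M0 + L * R) * \<bar>s0 - r\<bar> \<le> (M0 + L * R) * (1 / (2 * L))"
        by (rule mult_left_mono) (use M0 Lpos R0 in simp)
      then show ?thesis using mv[OF s0(1)] by simp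
    qed
    also have "\<dots> = norm (\<eta> r - c) + K / 2 + R / 2" using Lpos by (simp add: K_def field_simps)
    finally have "R \<le> 2 * norm (\<eta> r - c) + K" by simp
    moreover have "norm (\<eta> s - c) \<le> R" using s0(2)[OF s] by (simp add: R_def)
    ultimately show ?thesis by simp
  qed
  define m where "m = nat (ceiling (2 * L * T)) + 1"
  have mge: "real m \<ge> 2 * L * T + 1"
  proof -
    have "2 * L * T \<le> real (nat (ceiling (2 * L * T)))" by linarith
    then show ?thesis by (simp add: m_def)
  qed
  have m0: "real m > 0" using mge Lpos T by (smt (verit) mult_pos_pos)
  define h where "h = T / real m"
  have h0: "h > 0" using T m0 by (simp add: h_def)
  have mh: "real m * h = T" using m0 by (simp add: h_def)
  have hL: "h \<le> 1 / (2 * L)"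
  proof -
    have "2 * L * T \<le> real m" using mge by simp
    then have "T \<le> real m / (2 * L)" using Lpos by (simp add: field_simps)
    then have "T / real m \<le> 1 / (2 * L)" using m0 by (simp add: field_simps)
    then show ?thesis by (simp add: h_def)
  qed
  have claim: "\<forall>s\<in>{0..T}. \<bar>s - t\<bar> \<le> real k * h \<longrightarrow> norm (\<eta> s - c) + K \<le> 2 ^ k * (norm (\<eta> t - c) + K)"
    if tr: "traj T \<eta>" and t: "t \<in> {0..T}" for \<eta> t k
  proof (induction k)
    case 0 then show ?case by simp
  next
    case (Suc k)
    show ?case
    proof (intro ballI impI)
      fix s assume s: "s \<in> {0..T}" and st: "\<bar>s - t\<bar> \<le> real (Suc k) * h"
      define s' where "s' = (if t \<le> s then max t (s - h) else min t (s + h))"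
      have s'1: "\<bar>s' - t\<bar> \<le> real k * h" using st h0 by (auto simp: s'_def max_def min_def algebra_simps)
      have s'2: "\<bar>s - s'\<bar> \<le> h" using h0 by (auto simp: s'_def max_def min_def)
      have s'3: "s' \<in> {0..T}" using s t h0 by (auto simp: s'_def max_def min_def)
      have "norm (\<eta> s - c) \<le> 2 * norm (\<eta> s' - c) + K"
        by (rule local[OF tr, of "min s s'" "max s s'"]) (use s s'2 s'3 hL in auto)
      moreover have "norm (\<eta> s' - c) + K \<le> 2 ^ k * (norm (\<eta> t - c) + K)"
        using Suc.IH s'1 s'3 by blast
      ultimately show "norm (\<eta> s - c) + K \<le> 2 ^ Suc k * (norm (\<eta> t - c) + K)" using K0 by simp
    qed
  qed
  define B where "B = 2 ^ m * (1 + K)"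
  show ?thesis
  proof (intro exI[of _ B] allI impI ballI)
    fix \<eta> s t assume tr: "traj T \<eta>" and s: "s \<in> {0..T}" and t: "t \<in> {0..T}"
    have "\<bar>s - t\<bar> \<le> real m * h" using s t mh by auto
    then have "norm (\<eta> s - c) + K \<le> 2 ^ m * (norm (\<eta> t - c) + K)"
      using claim[OF tr t, of m] s by blast
    also have "\<dots> \<le> 2 ^ m * ((1 + K) * (norm (\<eta> t - c) + 1))"
    proof (rule mult_left_mono)
      have "0 \<le> K * norm (\<eta> t - c)" using K0 by simp
      then show "norm (\<eta> t - c) + K \<le> (1 + K) * (norm (\<eta> t - c) + 1)" by (simp add: algebra_simps)
    qed simp
    finally show "norm (\<eta> s - c) \<le> B * (norm (\<eta> t - c) + 1)" using K0 by (simp add: B_def mult.assoc)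
  qed
qed

end



lemma bdd_cball_image:
  fixes f :: "'a::euclidean_space \<Rightarrow> real"
  assumes "continuous_on UNIV f"
  shows "bdd_above (f ` cball c r)" "bdd_below (f ` cball c r)"
proof -
  have "compact (f ` cball c r)"
    by (rule compact_continuous_image[OF continuous_on_subset[OF assms] compact_cball]) simp
  then have "bounded (f ` cball c r)" by (rule compact_imp_bounded)
  then show "bdd_above (f ` cball c r)" "bdd_below (f ` cball c r)"
    by (auto intro: bounded_imp_bdd_above bounded_imp_bdd_below)
qed

theorem corollary5p3:
  fixes G :: "'a::euclidean_space \<Rightarrow> 'a set" and T :: real and g0 :: "'a \<Rightarrow> real"
  assumes "T > 0"
    and "\<exists>L. \<forall>x y. hausdist (G x) (G y) \<le> L * dist x y"
    and "\<And>x. G x \<noteq> {}" and "\<And>x. convex (G x)" and "\<And>x. compact (G x)"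
    and "continuous_on UNIV g0"
  shows "reconstructible G T g0 \<longleftrightarrow>
         (\<exists>g::'a \<Rightarrow> real. continuous_on UNIV g \<and> g0 = inv_mayer_value G T g 0)"
proof -
  note T = assms(1)
  note g0c = assms(6)
  obtain L0 where L0: "\<And>x y. hausdist (G x) (G y) \<le> L0 * dist x y" using assms(2) by blast
  define L where "L = max L0 1"
  interpret lipG G L
  proof
    show "G x \<noteq> {}" "convex (G x)" "compact (G x)" for x using assms(3-5) by auto
    show "hausdist (G x) (G y) \<le> L * dist x y" for x y
    proof -
      have "L0 * dist x y \<le> L * dist x y" by (rule mult_right_mono) (auto simp: L_def)
      then show ?thesis using L0[of x y] by linarith
    qed
    show "L > 0" by (simp add: L_def)
  qed
  define U where "U = mayer_value G T g0 T"
  have SolE: "\<xi> \<in> Sol G T t0 x0 \<longleftrightarrow> traj T \<xi> \<and> \<xi> t0 = x0" for \<xi> t0 x0 by (simp add: Sol_eq)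
  show ?thesis
  proof
    assume rec: "reconstructible G T g0"
    have contU: "continuous_on UNIV U"
    proof (cases "\<forall>y. Sol G T T y = {}")
      case True
      then have "U = (\<lambda>y. Inf {})" by (auto simp: U_def mayer_value_def)
      then show ?thesis by simp
    next
      case False
      then obtain y0 \<eta>0 where \<eta>0: "\<eta>0 \<in> Sol G T T y0" by blast
      have ne: "Sol G T T y \<noteq> {}" for y
      proof -
        obtain \<zeta> where "traj T \<zeta>" "\<zeta> T = y"
          using FIL[OF T _ zero_less_one, of \<eta>0 y] \<eta>0 by (auto simp: SolE)
        then show ?thesis by (auto simp: SolE)
      qed
      show ?thesis
        unfolding continuous_on_iff
      proof (intro ballI allI impI)
        fix y and \<epsilon> :: real assume e: "\<epsilon> > 0"
        obtain B where B: "\<And>\<eta> s t. traj T \<eta> \<Longrightarrow> s \<in> {0..T} \<Longrightarrow> t \<in> {0..T} \<Longrightarrow> norm (\<eta> s - y) \<le> B * (norm (\<eta> t - y) + 1)"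
          using traj_bound[OF T, of y] by blast
        define K where "K = cball y (2 * \<bar>B\<bar>)"
        have inK: "\<eta> 0 \<in> K" if "\<eta> \<in> Sol G T T y'" "y' \<in> cball y 1" for \<eta> y'
        proof -
          have tr: "traj T \<eta>" and eT: "\<eta> T = y'" using that by (auto simp: SolE)
          have "norm (\<eta> 0 - y) \<le> B * (norm (\<eta> T - y) + 1)" by (rule B[OF tr]) (use T in auto)
          also have "\<dots> \<le> \<bar>B\<bar> * (norm (\<eta> T - y) + 1)" by (rule mult_right_mono) auto
          also have "\<dots> \<le> \<bar>B\<bar> * 2"
            by (rule mult_left_mono) (use that eT in \<open>auto simp: dist_norm norm_minus_commute\<close>)
          finally show ?thesis by (simp add: K_def dist_norm norm_minus_commute mult.commute)
        qed
        have ucK: "uniformly_continuous_on K g0"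
          unfolding K_def by (rule compact_uniformly_continuous[OF continuous_on_subset[OF g0c] compact_cball]) simp
        obtain d0 where d0: "d0 > 0" "\<And>a b. a \<in> K \<Longrightarrow> b \<in> K \<Longrightarrow> dist b a < d0 \<Longrightarrow> dist (g0 b) (g0 a) < \<epsilon> / 2"
        proof -
          have "\<exists>d>0. \<forall>a\<in>K. \<forall>b\<in>K. dist b a < d \<longrightarrow> dist (g0 b) (g0 a) < \<epsilon> / 2"
          proof -
            have e2: "\<epsilon> / 2 > 0" using e by simp
            show ?thesis using ucK e2 unfolding uniformly_continuous_on_def by blast
          qed
          then show ?thesis using that by blast
        qed
        have bb: "bdd_below (g0 ` K)" unfolding K_def by (rule bdd_cball_image(2)[OF g0c])
        define KE where "KE = exp (2 * L * T)"
        have KE: "KE > 0" by (simp add: KE_def)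
        define d1 where "d1 = d0 / (4 * KE)"
        have d1: "d1 > 0" using d0 KE by (simp add: d1_def)
        have key: "U y2 \<le> U y1 + \<epsilon> / 2"
          if y12: "y1 \<in> cball y 1" "y2 \<in> cball y 1" "dist y1 y2 < d1" for y1 y2
        proof -
          define A1 where "A1 = {g0 (\<eta> 0) | \<eta>. \<eta> \<in> Sol G T T y1}"
          define A2 where "A2 = {g0 (\<eta> 0) | \<eta>. \<eta> \<in> Sol G T T y2}"
          have U1: "U y1 = Inf A1" and U2: "U y2 = Inf A2" by (simp_all add: U_def mayer_value_def A1_def A2_def)
          have A1ne: "A1 \<noteq> {}" using ne[of y1] by (auto simp: A1_def)
          have bdd2: "bdd_below A2"
          proof -
            have "A2 \<subseteq> g0 ` K" using inK[OF _ y12(2)] by (auto simp: A2_def)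
            then show ?thesis using bb by (rule bdd_below_mono[rotated])
          qed
          have "U y2 - \<epsilon> / 2 \<le> a" if a: "a \<in> A1" for a
          proof -
            obtain \<eta> where \<eta>: "\<eta> \<in> Sol G T T y1" "a = g0 (\<eta> 0)" using a by (auto simp: A1_def)
            have tr: "traj T \<eta>" and eT: "\<eta> T = y1" using \<eta>(1) by (auto simp: SolE)
            obtain \<zeta> where \<zeta>: "traj T \<zeta>" "\<zeta> T = y2" "norm (\<zeta> 0 - \<eta> 0) \<le> KE * (norm (y2 - \<eta> T) + d1)"
              using FIL[OF T tr d1, of y2] by (auto simp: KE_def)
            have \<zeta>S: "\<zeta> \<in> Sol G T T y2" using \<zeta> by (simp add: SolE)
            have "norm (\<zeta> 0 - \<eta> 0) < d0"
            proof -
              have "norm (y2 - \<eta> T) < d1" using y12(3) eT by (simp add: dist_norm norm_minus_commute)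
              then have "KE * (norm (y2 - \<eta> T) + d1) < KE * (d1 + d1)" using KE by simp
              also have "\<dots> = d0 / 2" using KE by (simp add: d1_def)
              also have "\<dots> < d0" using d0 by simp
              finally show ?thesis using \<zeta>(3) by linarith
            qed
            then have "dist (g0 (\<zeta> 0)) (g0 (\<eta> 0)) < \<epsilon> / 2"
              using d0(2)[OF inK[OF \<eta>(1) y12(1)] inK[OF \<zeta>S y12(2)]] by (simp add: dist_norm)
            moreover have "U y2 \<le> g0 (\<zeta> 0)"
              unfolding U2 by (rule cInf_lower[OF _ bdd2]) (use \<zeta>S in \<open>auto simp: A2_def\<close>)
            ultimately show ?thesis using \<eta>(2) unfolding dist_real_def by linarith
          qed
          then have "U y2 - \<epsilon> / 2 \<le> Inf A1" by (intro cInf_greatest[OF A1ne]) auto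
          then show ?thesis using U1 by simp
        qed
        show "\<exists>d>0. \<forall>y'\<in>UNIV. dist y' y < d \<longrightarrow> dist (U y') (U y) < \<epsilon>"
        proof (intro exI[of _ "min 1 d1"] conjI ballI impI)
          show "min 1 d1 > 0" using d1 by simp
          fix y' assume y': "dist y' y < min 1 d1"
          have yy: "y \<in> cball y 1" and yy': "y' \<in> cball y 1" using y' by (auto simp: dist_commute)
          have "U y' \<le> U y + \<epsilon> / 2" by (rule key[OF yy yy']) (use y' in \<open>auto simp: dist_commute\<close>)
          moreover have "U y \<le> U y' + \<epsilon> / 2" by (rule key[OF yy' yy]) (use y' in auto)
          ultimately show "dist (U y') (U y) < \<epsilon>" using e by (simp add: dist_real_def abs_le_iff)
        qed
      qed
    qed
    have "g0 = inv_mayer_value G T U 0" using rec by (simp add: reconstructible_def U_def)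
    then show "\<exists>g. continuous_on UNIV g \<and> g0 = inv_mayer_value G T g 0" using contU by blast
  next
    assume "\<exists>g. continuous_on UNIV g \<and> g0 = inv_mayer_value G T g 0"
    then obtain g where gc: "continuous_on UNIV g" and gV: "g0 = inv_mayer_value G T g 0" by blast
    define S where "S z = {g (\<xi> T) | \<xi>. \<xi> \<in> Sol G T 0 z}" for z
    have g0S: "g0 z = Sup (S z)" for z using gV by (simp add: inv_mayer_value_def S_def)
    have bddS: "bdd_above (S z)" for z
    proof -
      obtain B where B: "\<And>\<eta> s t. traj T \<eta> \<Longrightarrow> s \<in> {0..T} \<Longrightarrow> t \<in> {0..T} \<Longrightarrow> norm (\<eta> s - z) \<le> B * (norm (\<eta> t - z) + 1)"
        using traj_bound[OF T, of z] by blast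
      have "S z \<subseteq> g ` cball z B"
      proof
        fix a assume "a \<in> S z"
        then obtain \<xi> where \<xi>: "\<xi> \<in> Sol G T 0 z" "a = g (\<xi> T)" by (auto simp: S_def)
        then have tr: "traj T \<xi>" and x0: "\<xi> 0 = z" by (auto simp: SolE)
        have "norm (\<xi> T - z) \<le> B * (norm (\<xi> 0 - z) + 1)" by (rule B[OF tr]) (use T in auto)
        then have "\<xi> T \<in> cball z B" using x0 by (simp add: dist_norm norm_minus_commute)
        then show "a \<in> g ` cball z B" using \<xi>(2) by blast
      qed
      then show ?thesis using bdd_cball_image(1)[OF gc] by (rule bdd_above_mono[rotated])
    qed
    have "g0 x = inv_mayer_value G T U 0 x" for x
    proof (cases "Sol G T 0 x = {}")
      case True
      then have "S x = {}" "{U (\<xi> T) | \<xi>. \<xi> \<in> Sol G T 0 x} = {}" by (auto simp: S_def)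
      then show ?thesis using g0S[of x] by (simp add: inv_mayer_value_def)
    next
      case False
      define R where "R = {U (\<xi> T) | \<xi>. \<xi> \<in> Sol G T 0 x}"
      have Uxi: "g (\<xi> T) \<le> U (\<xi> T) \<and> U (\<xi> T) \<le> g0 x" if xi: "\<xi> \<in> Sol G T 0 x" for \<xi>
      proof -
        define A where "A = {g0 (\<eta> 0) | \<eta>. \<eta> \<in> Sol G T T (\<xi> T)}"
        have UA: "U (\<xi> T) = Inf A" by (simp add: U_def mayer_value_def A_def)
        have tr: "traj T \<xi>" and x0: "\<xi> 0 = x" using xi by (auto simp: SolE)
        have xA: "g0 x \<in> A"
        proof -
          have "\<xi> \<in> Sol G T T (\<xi> T)" using tr by (simp add: SolE)
          then show ?thesis using x0 by (auto simp: A_def)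
        qed
        have lb: "g (\<xi> T) \<le> a" if a: "a \<in> A" for a
        proof -
          obtain \<eta> where \<eta>: "\<eta> \<in> Sol G T T (\<xi> T)" "a = g0 (\<eta> 0)" using a by (auto simp: A_def)
          then have "\<eta> \<in> Sol G T 0 (\<eta> 0)" and eT: "\<eta> T = \<xi> T" by (auto simp: SolE)
          then have "g (\<eta> T) \<in> S (\<eta> 0)" unfolding S_def by blast
          then have "g (\<xi> T) \<in> S (\<eta> 0)" using eT by simp
          then have "g (\<xi> T) \<le> Sup (S (\<eta> 0))" by (rule cSup_upper[OF _ bddS])
          then show ?thesis using \<eta>(2) g0S[of "\<eta> 0"] by simp
        qed
        have "g (\<xi> T) \<le> Inf A" using xA lb by (intro cInf_greatest) auto
        moreover have "Inf A \<le> g0 x" by (rule cInf_lower[OF xA]) (use lb in \<open>auto simp: bdd_below_def\<close>)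
        ultimately show ?thesis using UA by simp
      qed
      have Rne: "R \<noteq> {}" using False by (auto simp: R_def)
      have Rb: "bdd_above R" using Uxi by (auto simp: R_def bdd_above_def)
      have le1: "Sup R \<le> g0 x" using Uxi Rne by (intro cSup_least) (auto simp: R_def)
      have "S x \<noteq> {}" using False by (auto simp: S_def)
      moreover have "a \<le> Sup R" if aS: "a \<in> S x" for a
      proof -
        obtain \<xi> where \<xi>: "\<xi> \<in> Sol G T 0 x" "a = g (\<xi> T)" using aS by (auto simp: S_def)
        have "U (\<xi> T) \<in> R" using \<xi>(1) by (auto simp: R_def)
        then have "U (\<xi> T) \<le> Sup R" by (rule cSup_upper[OF _ Rb])
        then show ?thesis using Uxi[OF \<xi>(1)] \<xi>(2) by simp
      qed
      ultimately have le2: "Sup (S x) \<le> Sup R" by (intro cSup_least) auto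
      show ?thesis using le1 le2 g0S[of x] by (simp add: inv_mayer_value_def R_def)
    qed
    then have "g0 = inv_mayer_value G T U 0" by (rule ext)
    then show "reconstructible G T g0" by (simp add: reconstructible_def U_def)
  qed
qed


end
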